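(* Let $(\alpha_D)_D$ be a holomorphically contractible family of pseudometrics and $n\ge3$. There exist a domain $D\subset\mathbb{C}^n$ and subdomains $D_1\subset D_2\subset\dots\subset D$ with $\bigcup_{m\ge1}D_m=D$ such that $\widetilde{\mathbb W}\alpha_{D_m}$ does not converge (pointwise) to $\widetilde{\mathbb W}\alpha_D$ and $\mathbb W\alpha_{D_m}$ does not converge (pointwise) to $\mathbb W\alpha_D$ as $m\to\infty$.
   Context: $\Delta$ is the open unit disc in $\mathbb{C}$. A pseudometric on a domain $D\subset\mathbb{C}^n$ is a function $\eta:D\times\mathbb{C}^n\to[0,\infty)$ with $\eta(a;\lambda X)=|\lambda|\eta(a;X)$. A holomorphically contractible family of pseudometrics is an assignment of a pseudometric $\alpha_D$ to every domain $D\subset\mathbb{C}^n$, for all $n\ge1$, such that $\alpha_\Delta(z;X)=|X|/(1-|z|^2)$ and $\alpha_{D_2}(F(z);F'(z)X)\le\alpha_{D_1}(z;X)$ for all domains $D_1\subset\mathbb{C}^{n_1}$, $D_2\subset\mathbb{C}^{n_2}$, holomorphic $F:D_1\to D_2$, $z\in D_1$, $X\in\mathbb{C}^{n_1}$. (Such $\alpha_D$ lie in $\mathcal M(D)$.) $\mathcal M(D)$: pseudometrics $\eta$ on $D$ such that for every $a\in D$ there are $M,r>0$ with $\eta(z;X)\le M\|X\|$ for $z$ in the ball $\mathbb{B}(a,r)\subset D$, $X\in\mathbb{C}^n$. Wu pseudometric: for $\eta\in\mathcal M(D)$ and $a\in D$, let $\widehat\eta(a;X)=\sup p(X)$ over all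 $\mathbb{C}$-seminorms $p\le\eta(a;\cdot)$. Let $V_\eta(a)=\{X:\widehat\eta(a;X)=0\}$, $U_\eta(a)$ its orthogonal complement (standard Hermitian product), $m(\eta,a)=\dim U_\eta(a)$. Let $\mathcal F(\eta,a)$ be the set of positive semidefinite Hermitian forms $s$ on $\mathbb{C}^n$ with $\sqrt{s(X,X)}\le\eta(a;X)$ for all $X$, ordered by $\alpha\prec\beta$ iff $\det[\alpha(e_j,e_k)]\le\det[\beta(e_j,e_k)]$ for a basis $(e_j)$ of $U_\eta(a)$; it has a unique maximal element $s(\eta,a)$. Set $\widetilde{\mathbb W}\eta(a;X)=\sqrt{s(\eta,a)(X,X)}$ and $\mathbb W\eta(a;X)=\sqrt{m(\eta,a)}\,\widetilde{\mathbb W}\eta(a;X)$. *)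

theory Defs
  imports "HOL-Analysis.Analysis"
begin

text \<open>C^n is modelled, uniformly in n, as the set of functions nat => complex
  vanishing outside {0..<n}; all notions are spelled out with explicit dimension n.\<close>

definition cvec :: "nat \<Rightarrow> (nat \<Rightarrow> complex) set" where
  "cvec n = {z. \<forall>i\<ge>n. z i = 0}"

definition vadd :: "(nat \<Rightarrow> complex) \<Rightarrow> (nat \<Rightarrow> complex) \<Rightarrow> (nat \<Rightarrow> complex)" where
  "vadd X Y = (\<lambda>i. X i + Y i)"

definition vsub :: "(nat \<Rightarrow> complex) \<Rightarrow> (nat \<Rightarrow> complex) \<Rightarrow> (nat \<Rightarrow> complex)" where
  "vsub X Y = (\<lambda>i. X i - Y i)"

definition vscale :: "complex \<Rightarrow> (nat \<Rightarrow> complex) \<Rightarrow> (nat \<Rightarrow> complex)" where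
  "vscale c X = (\<lambda>i. c * X i)"

definition cinner :: "nat \<Rightarrow> (nat \<Rightarrow> complex) \<Rightarrow> (nat \<Rightarrow> complex) \<Rightarrow> complex" where
  "cinner n X Y = (\<Sum>i<n. X i * cnj (Y i))"

definition cnorm :: "nat \<Rightarrow> (nat \<Rightarrow> complex) \<Rightarrow> real" where
  "cnorm n X = sqrt (\<Sum>i<n. (cmod (X i))\<^sup>2)"

definition copen :: "nat \<Rightarrow> (nat \<Rightarrow> complex) set \<Rightarrow> bool" where
  "copen n D \<longleftrightarrow> D \<subseteq> cvec n \<and>
     (\<forall>a\<in>D. \<exists>r>0. \<forall>z\<in>cvec n. cnorm n (vsub z a) < r \<longrightarrow> z \<in> D)"

definition cconnected :: "nat \<Rightarrow> (nat \<Rightarrow> complex) set \<Rightarrow> bool" where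
  "cconnected n D \<longleftrightarrow> \<not> (\<exists>U V. copen n U \<and> copen n V \<and> D \<subseteq> U \<union> V \<and>
       U \<inter> V \<inter> D = {} \<and> U \<inter> D \<noteq> {} \<and> V \<inter> D \<noteq> {})"

definition cdomain :: "nat \<Rightarrow> (nat \<Rightarrow> complex) set \<Rightarrow> bool" where
  "cdomain n D \<longleftrightarrow> D \<noteq> {} \<and> copen n D \<and> cconnected n D"

definition unit_disc :: "(nat \<Rightarrow> complex) set" where
  "unit_disc = {z \<in> cvec 1. cmod (z 0) < 1}"

definition clinear :: "nat \<Rightarrow> nat \<Rightarrow> ((nat \<Rightarrow> complex) \<Rightarrow> (nat \<Rightarrow> complex)) \<Rightarrow> bool" where
  "clinear n1 n2 L \<longleftrightarrow> (\<forall>X\<in>cvec n1. L X \<in> cvec n2) \<and>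
     (\<forall>X\<in>cvec n1. \<forall>Y\<in>cvec n1. L (vadd X Y) = vadd (L X) (L Y)) \<and>
     (\<forall>c. \<forall>X\<in>cvec n1. L (vscale c X) = vscale c (L X))"

definition chas_deriv :: "nat \<Rightarrow> nat \<Rightarrow> ((nat \<Rightarrow> complex) \<Rightarrow> (nat \<Rightarrow> complex)) \<Rightarrow>
    ((nat \<Rightarrow> complex) \<Rightarrow> (nat \<Rightarrow> complex)) \<Rightarrow> (nat \<Rightarrow> complex) \<Rightarrow> bool" where
  "chas_deriv n1 n2 F L z \<longleftrightarrow> clinear n1 n2 L \<and>
     (\<forall>\<epsilon>>0. \<exists>\<delta>>0. \<forall>h\<in>cvec n1. cnorm n1 h < \<delta> \<longrightarrow>
        cnorm n2 (vsub (vsub (F (vadd z h)) (F z)) (L h)) \<le> \<epsilon> * cnorm n1 h)"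

definition cholo :: "nat \<Rightarrow> nat \<Rightarrow> ((nat \<Rightarrow> complex) \<Rightarrow> (nat \<Rightarrow> complex)) \<Rightarrow>
    (nat \<Rightarrow> complex) set \<Rightarrow> (nat \<Rightarrow> complex) set \<Rightarrow> bool" where
  "cholo n1 n2 F D1 D2 \<longleftrightarrow> (\<forall>z\<in>D1. F z \<in> D2 \<and> (\<exists>L. chas_deriv n1 n2 F L z))"

definition pseudometric :: "nat \<Rightarrow> (nat \<Rightarrow> complex) set \<Rightarrow>
    ((nat \<Rightarrow> complex) \<Rightarrow> (nat \<Rightarrow> complex) \<Rightarrow> real) \<Rightarrow> bool" where
  "pseudometric n D \<eta> \<longleftrightarrow> (\<forall>a\<in>D. \<forall>X\<in>cvec n. \<eta> a X \<ge> 0 \<and>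
     (\<forall>c. \<eta> a (vscale c X) = cmod c * \<eta> a X))"

text \<open>A family: alpha n D is the pseudometric assigned to the domain D of C^n.\<close>
definition hol_contractible :: "(nat \<Rightarrow> (nat \<Rightarrow> complex) set \<Rightarrow>
    (nat \<Rightarrow> complex) \<Rightarrow> (nat \<Rightarrow> complex) \<Rightarrow> real) \<Rightarrow> bool" where
  "hol_contractible \<alpha> \<longleftrightarrow>
     (\<forall>n D. n \<ge> 1 \<longrightarrow> cdomain n D \<longrightarrow> pseudometric n D (\<alpha> n D)) \<and>
     (\<forall>z\<in>unit_disc. \<forall>X\<in>cvec 1. \<alpha> 1 unit_disc z X = cmod (X 0) / (1 - (cmod (z 0))\<^sup>2)) \<and>
     (\<forall>n1 n2 D1 D2 F L z X. n1 \<ge> 1 \<longrightarrow> n2 \<ge> 1 \<longrightarrow> cdomain n1 D1 \<longrightarrow> cdomain n2 D2 \<longrightarrow>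
        cholo n1 n2 F D1 D2 \<longrightarrow> z \<in> D1 \<longrightarrow> X \<in> cvec n1 \<longrightarrow> chas_deriv n1 n2 F L z \<longrightarrow>
        \<alpha> n2 D2 (F z) (L X) \<le> \<alpha> n1 D1 z X)"

definition cseminorm :: "nat \<Rightarrow> ((nat \<Rightarrow> complex) \<Rightarrow> real) \<Rightarrow> bool" where
  "cseminorm n p \<longleftrightarrow> (\<forall>X\<in>cvec n. p X \<ge> 0) \<and>
     (\<forall>X\<in>cvec n. \<forall>Y\<in>cvec n. p (vadd X Y) \<le> p X + p Y) \<and>
     (\<forall>c. \<forall>X\<in>cvec n. p (vscale c X) = cmod c * p X)"

definition hat_metric :: "nat \<Rightarrow> ((nat \<Rightarrow> complex) \<Rightarrow> (nat \<Rightarrow> complex) \<Rightarrow> real) \<Rightarrow>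
    (nat \<Rightarrow> complex) \<Rightarrow> (nat \<Rightarrow> complex) \<Rightarrow> real" where
  "hat_metric n \<eta> a X = Sup {p X | p. cseminorm n p \<and> (\<forall>Y\<in>cvec n. p Y \<le> \<eta> a Y)}"

definition V_set :: "nat \<Rightarrow> ((nat \<Rightarrow> complex) \<Rightarrow> (nat \<Rightarrow> complex) \<Rightarrow> real) \<Rightarrow>
    (nat \<Rightarrow> complex) \<Rightarrow> (nat \<Rightarrow> complex) set" where
  "V_set n \<eta> a = {X \<in> cvec n. hat_metric n \<eta> a X = 0}"

definition U_set :: "nat \<Rightarrow> ((nat \<Rightarrow> complex) \<Rightarrow> (nat \<Rightarrow> complex) \<Rightarrow> real) \<Rightarrow>
    (nat \<Rightarrow> complex) \<Rightarrow> (nat \<Rightarrow> complex) set" where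
  "U_set n \<eta> a = {Y \<in> cvec n. \<forall>X\<in>V_set n \<eta> a. cinner n X Y = 0}"

definition is_basis :: "nat \<Rightarrow> (nat \<Rightarrow> complex) set \<Rightarrow> nat \<Rightarrow> (nat \<Rightarrow> nat \<Rightarrow> complex) \<Rightarrow> bool" where
  "is_basis n S k e \<longleftrightarrow> (\<forall>j<k. e j \<in> S) \<and>
     (\<forall>c. (\<forall>i. (\<Sum>j<k. c j * e j i) = 0) \<longrightarrow> (\<forall>j<k. c j = 0)) \<and>
     (\<forall>Y\<in>S. \<exists>c. Y = (\<lambda>i. \<Sum>j<k. c j * e j i))"

definition cdim :: "nat \<Rightarrow> (nat \<Rightarrow> complex) set \<Rightarrow> nat" where
  "cdim n S = (THE k. \<exists>e. is_basis n S k e)"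

definition m_index :: "nat \<Rightarrow> ((nat \<Rightarrow> complex) \<Rightarrow> (nat \<Rightarrow> complex) \<Rightarrow> real) \<Rightarrow>
    (nat \<Rightarrow> complex) \<Rightarrow> nat" where
  "m_index n \<eta> a = cdim n (U_set n \<eta> a)"

text \<open>Hermitian forms on C^n, represented by their (n x n) matrix H, zero outside n x n:
  s(X,Y) = sum_{i,j} H i j X_i conj(Y_j)\<close>
definition hform :: "nat \<Rightarrow> (nat \<Rightarrow> nat \<Rightarrow> complex) \<Rightarrow> (nat \<Rightarrow> complex) \<Rightarrow> (nat \<Rightarrow> complex) \<Rightarrow> complex" where
  "hform n H X Y = (\<Sum>i<n. \<Sum>j<n. H i j * X i * cnj (Y j))"

definition psd_hermitian :: "nat \<Rightarrow> (nat \<Rightarrow> nat \<Rightarrow> complex) \<Rightarrow> bool" where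
  "psd_hermitian n H \<longleftrightarrow> (\<forall>i j. (i \<ge> n \<or> j \<ge> n) \<longrightarrow> H i j = 0) \<and>
     (\<forall>i j. H j i = cnj (H i j)) \<and> (\<forall>X\<in>cvec n. Re (hform n H X X) \<ge> 0)"

definition F_set :: "nat \<Rightarrow> ((nat \<Rightarrow> complex) \<Rightarrow> (nat \<Rightarrow> complex) \<Rightarrow> real) \<Rightarrow>
    (nat \<Rightarrow> complex) \<Rightarrow> (nat \<Rightarrow> nat \<Rightarrow> complex) set" where
  "F_set n \<eta> a = {H. psd_hermitian n H \<and> (\<forall>X\<in>cvec n. sqrt (Re (hform n H X X)) \<le> \<eta> a X)}"

definition cdet :: "nat \<Rightarrow> (nat \<Rightarrow> nat \<Rightarrow> complex) \<Rightarrow> complex" where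
  "cdet k A = (\<Sum>p | p permutes {..<k}. of_int (sign p) * (\<Prod>j<k. A j (p j)))"

definition gram_det :: "nat \<Rightarrow> (nat \<Rightarrow> nat \<Rightarrow> complex) \<Rightarrow> nat \<Rightarrow> (nat \<Rightarrow> nat \<Rightarrow> complex) \<Rightarrow> real" where
  "gram_det n H k e = Re (cdet k (\<lambda>j l. hform n H (e j) (e l)))"

text \<open>the order on F(eta,a): via a basis of U_eta(a) (independent of the basis)\<close>
definition form_prec :: "nat \<Rightarrow> ((nat \<Rightarrow> complex) \<Rightarrow> (nat \<Rightarrow> complex) \<Rightarrow> real) \<Rightarrow>
    (nat \<Rightarrow> complex) \<Rightarrow> (nat \<Rightarrow> nat \<Rightarrow> complex) \<Rightarrow> (nat \<Rightarrow> nat \<Rightarrow> complex) \<Rightarrow> bool" where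
  "form_prec n \<eta> a H1 H2 \<longleftrightarrow>
     (\<forall>k e. is_basis n (U_set n \<eta> a) k e \<longrightarrow> gram_det n H1 k e \<le> gram_det n H2 k e)"

definition s_max :: "nat \<Rightarrow> ((nat \<Rightarrow> complex) \<Rightarrow> (nat \<Rightarrow> complex) \<Rightarrow> real) \<Rightarrow>
    (nat \<Rightarrow> complex) \<Rightarrow> (nat \<Rightarrow> nat \<Rightarrow> complex)" where
  "s_max n \<eta> a = (THE H. H \<in> F_set n \<eta> a \<and> (\<forall>H'\<in>F_set n \<eta> a. form_prec n \<eta> a H' H))"

definition Wu_tilde :: "nat \<Rightarrow> ((nat \<Rightarrow> complex) \<Rightarrow> (nat \<Rightarrow> complex) \<Rightarrow> real) \<Rightarrow>
    (nat \<Rightarrow> complex) \<Rightarrow> (nat \<Rightarrow> complex) \<Rightarrow> real" where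
  "Wu_tilde n \<eta> a X = sqrt (Re (hform n (s_max n \<eta> a) X X))"

definition Wu :: "nat \<Rightarrow> ((nat \<Rightarrow> complex) \<Rightarrow> (nat \<Rightarrow> complex) \<Rightarrow> real) \<Rightarrow>
    (nat \<Rightarrow> complex) \<Rightarrow> (nat \<Rightarrow> complex) \<Rightarrow> real" where
  "Wu n \<eta> a X = sqrt (real (m_index n \<eta> a)) * Wu_tilde n \<eta> a X"

end

theory Submission
  imports Defs
begin


lemma cnorm_ge0: "cnorm n X \<ge> 0" unfolding cnorm_def by (simp add: sum_nonneg)

lemma cnorm_coord: "i < n \<Longrightarrow> cmod (X i) \<le> cnorm n X"
proof -
  assume i: "i < n"
  have "(cmod (X i))\<^sup>2 \<le> (\<Sum>j<n. (cmod (X j))\<^sup>2)"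
    using i by (intro member_le_sum) auto
  then have "sqrt ((cmod (X i))\<^sup>2) \<le> cnorm n X" unfolding cnorm_def
    using real_sqrt_le_mono by blast
  then show ?thesis by simp
qed

lemma cnorm_scale: "cnorm n (vscale c X) = cmod c * cnorm n X"
proof -
  have "(\<Sum>j<n. (cmod (c * X j))\<^sup>2) = (cmod c)\<^sup>2 * (\<Sum>j<n. (cmod (X j))\<^sup>2)"
    by (simp add: norm_mult power_mult_distrib sum_distrib_left)
  then show ?thesis unfolding cnorm_def vscale_def
    by (simp add: real_sqrt_mult)
qed

lemma cnorm_zero: "cnorm n (\<lambda>i. 0) = 0" unfolding cnorm_def by simp

lemma chas_deriv_linear:
  assumes "clinear n1 n2 F" "\<And>z h. F (vadd z h) = vadd (F z) (F h)"
  shows "chas_deriv n1 n2 F F z"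
proof -
  have "vsub (vsub (F (vadd z h)) (F z)) (F h) = (\<lambda>i. 0)" for h
    using assms(2) by (auto simp: vsub_def vadd_def)
  then show ?thesis unfolding chas_deriv_def using assms(1)
    by (auto simp: cnorm_zero cnorm_ge0 intro!: exI[of _ 1])
qed

lemma cdet1: "cdet 1 A = A 0 0"
  unfolding cdet_def by (simp add: lessThan_Suc)

lemma cdet2: "cdet 2 A = A 0 0 * A 1 1 - A 0 1 * A 1 0"
proof -
  have e: "{..<2::nat} = insert 0 {1}" by auto
  have f12: "finite {1::nat}" "0 \<notin> {1::nat}" by auto
  show ?thesis
    unfolding cdet_def e
    unfolding sum_over_permutations_insert[OF f12]
    unfolding permutes_sing
    by (simp add: sign_swap_id sign_id swap_id_eq)
qed

lemma convex_cconnected: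
  assumes sub: "S \<subseteq> cvec n"
    and cv: "\<And>p q t. p \<in> S \<Longrightarrow> q \<in> S \<Longrightarrow> 0 \<le> t \<Longrightarrow> t \<le> (1::real) \<Longrightarrow>
              (\<lambda>i. p i + of_real t * (q i - p i)) \<in> S"
  shows "cconnected n S"
  unfolding cconnected_def
proof (rule notI, elim exE conjE)
  fix U V assume U: "copen n U" and V: "copen n V" and cov: "S \<subseteq> U \<union> V"
    and dis: "U \<inter> V \<inter> S = {}" and ne1: "U \<inter> S \<noteq> {}" and ne2: "V \<inter> S \<noteq> {}"
  obtain p where p: "p \<in> U" "p \<in> S" using ne1 by auto
  obtain q where q: "q \<in> V" "q \<in> S" using ne2 by auto
  define \<gamma> where "\<gamma> = (\<lambda>t::real. (\<lambda>i. p i + of_real t * (q i - p i)))"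
  have \<gamma>c: "\<gamma> t \<in> cvec n" for t
  proof -
    have "p \<in> cvec n" "q \<in> cvec n" using sub p q by auto
    then show ?thesis unfolding \<gamma>_def cvec_def by auto
  qed
  have dif: "vsub (\<gamma> s) (\<gamma> t) = vscale (of_real (s - t)) (vsub q p)" for s t
    unfolding \<gamma>_def vsub_def vscale_def by (auto simp: algebra_simps)
  have opn: "open {t. \<gamma> t \<in> W}" if W: "copen n W" for W
    unfolding open_dist
  proof (intro ballI)
    fix t assume "t \<in> {t. \<gamma> t \<in> W}"
    then have "\<gamma> t \<in> W" by auto
    then obtain r where r: "r > 0" "\<forall>z\<in>cvec n. cnorm n (vsub z (\<gamma> t)) < r \<longrightarrow> z \<in> W"
      using W unfolding copen_def by blast
    define e where "e = r / (cnorm n (vsub q p) + 1)"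
    have cpos: "cnorm n (vsub q p) + 1 > 0" using cnorm_ge0[of n "vsub q p"] by linarith
    have e: "e > 0" unfolding e_def using r cpos by simp
    show "\<exists>e>0. \<forall>y. dist y t < e \<longrightarrow> y \<in> {t. \<gamma> t \<in> W}"
    proof (intro exI[of _ e] conjI allI impI)
      fix y assume "dist y t < e"
      then have d: "\<bar>y - t\<bar> < e" by (simp add: dist_real_def)
      have "cnorm n (vsub (\<gamma> y) (\<gamma> t)) = \<bar>y - t\<bar> * cnorm n (vsub q p)"
        by (simp add: dif cnorm_scale flip: of_real_diff)
      also have "\<dots> \<le> \<bar>y - t\<bar> * (cnorm n (vsub q p) + 1)" by (intro mult_left_mono) auto
      also have "\<dots> < e * (cnorm n (vsub q p) + 1)"
        using d cpos by (intro mult_strict_right_mono) auto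
      also have "\<dots> = r" unfolding e_def using cpos by simp
      finally show "y \<in> {t. \<gamma> t \<in> W}" using r \<gamma>c by auto
    qed (rule e)
  qed
  have inS: "\<gamma> t \<in> S" if "t \<in> {0..1}" for t
    using cv[OF p(2) q(2)] that unfolding \<gamma>_def by auto
  have "{t. \<gamma> t \<in> U} \<inter> {0..1} = {} \<or> {t. \<gamma> t \<in> V} \<inter> {0..1} = {}"
  proof (rule connectedD[OF connected_Icc opn[OF U] opn[OF V]])
    show "{t. \<gamma> t \<in> U} \<inter> {t. \<gamma> t \<in> V} \<inter> {0..1} = {}" using dis inS by blast
    show "{0..1} \<subseteq> {t. \<gamma> t \<in> U} \<union> {t. \<gamma> t \<in> V}" using cov inS by blast
  qed
  moreover have "\<gamma> 0 = p" "\<gamma> 1 = q" unfolding \<gamma>_def by auto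
  ultimately show False using p q by force
qed



definition zv :: "nat \<Rightarrow> complex" where "zv = (\<lambda>i. 0)"

definition Dset :: "nat \<Rightarrow> (nat \<Rightarrow> complex) set" where
  "Dset n = {z \<in> cvec n. cmod (z 0) < 1}"

definition Gset :: "nat \<Rightarrow> real \<Rightarrow> (nat \<Rightarrow> complex) set" where
  "Gset n r = {z \<in> cvec n. cmod (z 0) < 1 \<and> cmod (z 1) < r \<and> cmod (z 0) + cmod (z 1) / r < 3/2}"

lemma unit_disc_Dset: "unit_disc = Dset 1" unfolding unit_disc_def Dset_def by simp

lemma cmod_convex:
  assumes "0 \<le> t" "t \<le> 1"
  shows "cmod (a + of_real t * (b - a)) \<le> (1 - t) * cmod a + t * cmod b"
proof -
  have "a + of_real t * (b - a) = of_real (1 - t) * a + of_real t * b" by (simp add: algebra_simps)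
  also have "cmod \<dots> \<le> cmod (of_real (1 - t) * a) + cmod (of_real t * b)" by (rule norm_triangle_ineq)
  also have "\<dots> = (1 - t) * cmod a + t * cmod b" using assms by (simp only: norm_mult norm_of_real)
  finally show ?thesis .
qed

lemma conv_strict:
  fixes t x y B :: real
  assumes t: "0 \<le> t" "t \<le> 1" and that: "x < B" "y < B"
  shows "(1 - t) * x + t * y < B"
proof -
  have "(1 - t) * x \<le> (1 - t) * B" using that t by (intro mult_left_mono) auto
  moreover have "t * y \<le> t * B" using that t by (intro mult_left_mono) auto
  moreover have "(1 - t) * x < (1 - t) * B \<or> t * y < t * B"
    using that t by (cases "t = 1") auto
  ultimately have "(1 - t) * x + t * y < (1 - t) * B + t * B" by linarith
  then show ?thesis by (simp add: algebra_simps)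
qed

lemma cvec_convex: "p \<in> cvec n \<Longrightarrow> q \<in> cvec n \<Longrightarrow> (\<lambda>i. p i + of_real t * (q i - p i)) \<in> cvec n"
  unfolding cvec_def by auto

lemma zv_cvec: "zv \<in> cvec n" unfolding zv_def cvec_def by auto

lemma Dset_domain: assumes "n \<ge> 1" shows "cdomain n (Dset n)"
proof -
  have "zv \<in> Dset n" unfolding Dset_def by (simp add: zv_cvec) (simp add: zv_def)
  moreover have "copen n (Dset n)"
    unfolding copen_def
  proof (intro conjI ballI)
    show "Dset n \<subseteq> cvec n" unfolding Dset_def by auto
    fix a assume a: "a \<in> Dset n"
    show "\<exists>r>0. \<forall>z\<in>cvec n. cnorm n (vsub z a) < r \<longrightarrow> z \<in> Dset n"
    proof (intro exI[of _ "1 - cmod (a 0)"] conjI ballI impI)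
      show "1 - cmod (a 0) > 0" using a unfolding Dset_def by auto
      fix z assume z: "z \<in> cvec n" "cnorm n (vsub z a) < 1 - cmod (a 0)"
      have "cmod (z 0 - a 0) \<le> cnorm n (vsub z a)" using cnorm_coord[of 0 n "vsub z a"] assms
        by (simp add: vsub_def)
      moreover have "cmod (z 0) \<le> cmod (a 0) + cmod (z 0 - a 0)"
        by (metis add.commute diff_add_cancel norm_triangle_ineq)
      ultimately show "z \<in> Dset n" using z unfolding Dset_def by auto
    qed
  qed
  moreover have "cconnected n (Dset n)"
  proof (rule convex_cconnected)
    show "Dset n \<subseteq> cvec n" unfolding Dset_def by auto
    fix p q and t :: real assume pq: "p \<in> Dset n" "q \<in> Dset n" and t: "0 \<le> t" "t \<le> 1"
    have "cmod (p 0 + of_real t * (q 0 - p 0)) \<le> (1 - t) * cmod (p 0) + t * cmod (q 0)"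
      by (rule cmod_convex[OF t])
    also have "\<dots> < 1" using pq unfolding Dset_def by (intro conv_strict[OF t]) auto
    finally show "(\<lambda>i. p i + of_real t * (q i - p i)) \<in> Dset n"
      using pq cvec_convex unfolding Dset_def by auto
  qed
  ultimately show ?thesis unfolding cdomain_def by auto
qed

lemma zv_Dset: "zv \<in> Dset n" unfolding Dset_def by (simp add: zv_cvec) (simp add: zv_def)

lemma zv_Gset: "r > 0 \<Longrightarrow> zv \<in> Gset n r" unfolding Gset_def by (simp add: zv_cvec) (simp add: zv_def)

lemma Gset_domain: assumes n: "n \<ge> 2" and r: "r \<ge> 1" shows "cdomain n (Gset n r)"
proof -
  have "copen n (Gset n r)"
    unfolding copen_def
  proof (intro conjI ballI)
    show "Gset n r \<subseteq> cvec n" unfolding Gset_def by auto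
    fix a assume a: "a \<in> Gset n r"
    define s where "s = min (1 - cmod (a 0)) (min ((r - cmod (a 1)) / r) (3/2 - cmod (a 0) - cmod (a 1) / r))"
    have a1: "cmod (a 0) < 1" "cmod (a 1) < r" "cmod (a 0) + cmod (a 1) / r < 3/2"
      using a unfolding Gset_def by auto
    have a2: "(r - cmod (a 1)) / r > 0" using a1 r by simp
    have s: "s > 0" unfolding s_def using a1 a2 by (smt (verit))
    show "\<exists>\<delta>>0. \<forall>z\<in>cvec n. cnorm n (vsub z a) < \<delta> \<longrightarrow> z \<in> Gset n r"
    proof (intro exI[of _ "s/2"] conjI ballI impI)
      show "s / 2 > 0" using s by simp
      fix z assume z: "z \<in> cvec n" "cnorm n (vsub z a) < s/2"
      have "cmod (z 0 - a 0) \<le> cnorm n (vsub z a)" using cnorm_coord[of 0 n "vsub z a"] n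
        by (simp add: vsub_def)
      moreover have "cmod (z 0) \<le> cmod (a 0) + cmod (z 0 - a 0)"
        by (metis add.commute diff_add_cancel norm_triangle_ineq)
      ultimately have z0: "cmod (z 0) < cmod (a 0) + s/2" using z by linarith
      have "cmod (z 1 - a 1) \<le> cnorm n (vsub z a)" using cnorm_coord[of 1 n "vsub z a"] n
        by (simp add: vsub_def)
      moreover have "cmod (z 1) \<le> cmod (a 1) + cmod (z 1 - a 1)"
        by (metis add.commute diff_add_cancel norm_triangle_ineq)
      ultimately have z1: "cmod (z 1) < cmod (a 1) + s/2" using z by linarith
      have s1: "s \<le> 1 - cmod (a 0)" "s \<le> (r - cmod (a 1)) / r" "s \<le> 3/2 - cmod (a 0) - cmod (a 1) / r"
        unfolding s_def by auto
      have "(r - cmod (a 1)) / r \<le> r - cmod (a 1)"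
        using r a unfolding Gset_def by (simp add: divide_le_eq)
      then have c1: "cmod (z 1) < r" using z1 s1 s by linarith
      have "cmod (z 1) / r < (cmod (a 1) + s/2) / r" using z1 r by (simp add: divide_strict_right_mono)
      also have "\<dots> \<le> cmod (a 1) / r + s/2" using r s by (simp add: add_divide_distrib divide_le_eq)
      finally have "cmod (z 0) + cmod (z 1) / r < 3/2" using z0 s1 by linarith
      moreover have "cmod (z 0) < 1" using z0 s1 s by linarith
      ultimately show "z \<in> Gset n r" using z c1 unfolding Gset_def by auto
    qed
  qed
  moreover have "cconnected n (Gset n r)"
  proof (rule convex_cconnected)
    show "Gset n r \<subseteq> cvec n" unfolding Gset_def by auto
    fix p q and t :: real assume pq: "p \<in> Gset n r" "q \<in> Gset n r" and t: "0 \<le> t" "t \<le> 1"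
    have i0: "cmod (p 0 + of_real t * (q 0 - p 0)) \<le> (1 - t) * cmod (p 0) + t * cmod (q 0)"
      by (rule cmod_convex[OF t])
    have i1: "cmod (p 1 + of_real t * (q 1 - p 1)) \<le> (1 - t) * cmod (p 1) + t * cmod (q 1)"
      by (rule cmod_convex[OF t])
    note cc = conv_strict[OF t]
    have P: "cmod (p 0) < 1" "cmod (p 1) < r" "cmod (p 0) + cmod (p 1) / r < 3/2"
      and Q: "cmod (q 0) < 1" "cmod (q 1) < r" "cmod (q 0) + cmod (q 1) / r < 3/2"
      using pq unfolding Gset_def by auto
    have a: "cmod (p 0 + of_real t * (q 0 - p 0)) < 1" using i0 cc[OF P(1) Q(1)] by linarith
    have b: "cmod (p 1 + of_real t * (q 1 - p 1)) < r" using i1 cc[OF P(2) Q(2)] by linarith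
    have "cmod (p 1 + of_real t * (q 1 - p 1)) / r \<le> ((1 - t) * cmod (p 1) + t * cmod (q 1)) / r"
      using i1 r by (simp add: divide_right_mono)
    also have "\<dots> = (1 - t) * (cmod (p 1) / r) + t * (cmod (q 1) / r)" by (simp add: add_divide_distrib)
    finally have "cmod (p 0 + of_real t * (q 0 - p 0)) + cmod (p 1 + of_real t * (q 1 - p 1)) / r
       \<le> (1 - t) * (cmod (p 0) + cmod (p 1) / r) + t * (cmod (q 0) + cmod (q 1) / r)"
      using i0 by (simp add: algebra_simps)
    also have "\<dots> < 3/2" by (rule cc[OF P(3) Q(3)])
    finally show "(\<lambda>i. p i + of_real t * (q i - p i)) \<in> Gset n r"
      using pq cvec_convex a b unfolding Gset_def by auto
  qed
  ultimately show ?thesis unfolding cdomain_def using zv_Gset[of r n] r by auto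
qed



definition unitvec :: "nat \<Rightarrow> nat \<Rightarrow> complex" where
  "unitvec k = (\<lambda>i. if i = k then 1 else 0)"

lemma unitvec_cvec: "k < n \<Longrightarrow> unitvec k \<in> cvec n" unfolding unitvec_def cvec_def by auto

lemma hcD:
  assumes "hol_contractible \<alpha>"
  shows "\<And>n D. n \<ge> 1 \<Longrightarrow> cdomain n D \<Longrightarrow> pseudometric n D (\<alpha> n D)"
    and "\<And>z X. z \<in> unit_disc \<Longrightarrow> X \<in> cvec 1 \<Longrightarrow> \<alpha> 1 unit_disc z X = cmod (X 0) / (1 - (cmod (z 0))\<^sup>2)"
    and "\<And>n1 n2 D1 D2 F L z X. n1 \<ge> 1 \<Longrightarrow> n2 \<ge> 1 \<Longrightarrow> cdomain n1 D1 \<Longrightarrow> cdomain n2 D2 \<Longrightarrow>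
        cholo n1 n2 F D1 D2 \<Longrightarrow> z \<in> D1 \<Longrightarrow> X \<in> cvec n1 \<Longrightarrow> chas_deriv n1 n2 F L z \<Longrightarrow>
        \<alpha> n2 D2 (F z) (L X) \<le> \<alpha> n1 D1 z X"
  using assms unfolding hol_contractible_def by blast+

lemma disc_domain: "cdomain 1 unit_disc" by (simp add: unit_disc_Dset Dset_domain)

lemma zv_disc: "zv \<in> unit_disc" by (simp add: unit_disc_Dset zv_Dset)

lemma alpha_lower:
  assumes hc: "hol_contractible \<alpha>" and n: "n \<ge> 1" and S: "cdomain n S" "zv \<in> S"
    and X: "X \<in> cvec n"
    and fadd: "\<And>z h. f (vadd z h) = f z + f h" and fsc: "\<And>c z. f (vscale c z) = c * f z"
    and fS: "\<And>z. z \<in> S \<Longrightarrow> cmod (f z) < 1"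
  shows "cmod (f X) \<le> \<alpha> n S zv X"
proof -
  define P where "P = (\<lambda>z. (\<lambda>i::nat. if i = 0 then f z else 0))"
  have f0: "f zv = 0"
  proof -
    have "vscale 0 zv = zv" unfolding vscale_def zv_def by simp
    then show ?thesis using fsc[of 0 zv] by simp
  qed
  have add: "P (vadd z h) = vadd (P z) (P h)" for z h
    unfolding P_def fadd by (auto simp: vadd_def)
  have sc: "P (vscale c z) = vscale c (P z)" for c z
    unfolding P_def fsc by (auto simp: vscale_def)
  have lin: "clinear n 1 P" unfolding clinear_def using add sc
    by (auto simp: cvec_def P_def)
  have der: "chas_deriv n 1 P P z" for z by (rule chas_deriv_linear[OF lin add])
  have cho: "cholo n 1 P S unit_disc" unfolding cholo_def
  proof (intro ballI conjI)
    fix z assume "z \<in> S"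
    then show "P z \<in> unit_disc" using fS unfolding unit_disc_def P_def cvec_def by auto
    show "\<exists>L. chas_deriv n 1 P L z" using der by blast
  qed
  have "\<alpha> 1 unit_disc (P zv) (P X) \<le> \<alpha> n S zv X"
    by (rule hcD(3)[OF hc n _ S(1) disc_domain cho S(2) X der]) simp
  moreover have "P zv = zv" unfolding P_def zv_def using f0 by (auto simp: zv_def)
  moreover have "P X \<in> cvec 1" unfolding P_def cvec_def by auto
  ultimately show ?thesis using hcD(2)[OF hc zv_disc] by (simp add: P_def zv_def)
qed

lemma alpha_upper:
  assumes hc: "hol_contractible \<alpha>" and n: "n \<ge> 1" and S: "cdomain n S" "zv \<in> S"
    and X: "X \<in> cvec n" and N: "N > 0"
    and inS: "\<And>l. l \<in> unit_disc \<Longrightarrow> vscale (l 0 / of_real N) X \<in> S"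
  shows "\<alpha> n S zv X \<le> N"
proof -
  define F where "F = (\<lambda>l::nat\<Rightarrow>complex. vscale (l 0 / of_real N) X)"
  have lin: "clinear 1 n F" unfolding clinear_def F_def using X
    by (auto simp: cvec_def vadd_def vscale_def fun_eq_iff algebra_simps add_divide_distrib)
  have add: "F (vadd z h) = vadd (F z) (F h)" for z h
    unfolding F_def vadd_def vscale_def by (auto simp: fun_eq_iff algebra_simps add_divide_distrib)
  have der: "chas_deriv 1 n F F z" for z by (rule chas_deriv_linear[OF lin add])
  have cho: "cholo 1 n F unit_disc S" unfolding cholo_def
    using inS der unfolding F_def by blast
  have e0: "unitvec 0 \<in> cvec 1" by (rule unitvec_cvec) simp
  have "\<alpha> n S (F zv) (F (unitvec 0)) \<le> \<alpha> 1 unit_disc zv (unitvec 0)"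
    by (rule hcD(3)[OF hc _ n disc_domain S(1) cho zv_disc e0 der]) simp
  moreover have "F zv = zv" unfolding F_def zv_def vscale_def by auto
  moreover have "F (unitvec 0) = vscale (of_real (1 / N)) X" unfolding F_def unitvec_def by simp
  moreover have "\<alpha> 1 unit_disc zv (unitvec 0) = 1"
    using hcD(2)[OF hc zv_disc e0] by (simp add: unitvec_def zv_def)
  moreover have "\<alpha> n S zv (vscale (of_real (1 / N)) X) = (1 / N) * \<alpha> n S zv X"
    using hcD(1)[OF hc n S(1)] S(2) X N unfolding pseudometric_def by (simp add: norm_divide)
  ultimately have "(1 / N) * \<alpha> n S zv X \<le> 1" by simp
  then show ?thesis using N by (simp add: field_simps)
qed

lemma alpha_nonneg:
  assumes hc: "hol_contractible \<alpha>" and n: "n \<ge> 1" and S: "cdomain n S" "a \<in> S" and X: "X \<in> cvec n"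
  shows "\<alpha> n S a X \<ge> 0"
  using hcD(1)[OF hc n S(1)] S(2) X unfolding pseudometric_def by blast



definition NG :: "real \<Rightarrow> (nat \<Rightarrow> complex) \<Rightarrow> real" where
  "NG r X = max (max (cmod (X 0)) (cmod (X 1) / r)) ((cmod (X 0) + cmod (X 1) / r) * (2/3))"

lemma le_of_all_gt:
  fixes a b :: real
  assumes "\<And>N. N > b \<Longrightarrow> a \<le> N" shows "a \<le> b"
proof (rule ccontr)
  assume "\<not> a \<le> b"
  then have "(a + b) / 2 > b" by simp
  from assms[OF this] \<open>\<not> a \<le> b\<close> show False by simp
qed

lemma cnj_sgn_mult: "cnj (sgn y) * y = of_real (cmod y)"
proof (cases "y = 0")
  case False
  have 1: "sgn y = y / of_real (cmod y)" by (simp add: sgn_eq)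
  have 2: "cnj y * y = of_real ((cmod y)^2)" by (simp add: complex_norm_square mult.commute del: of_real_power)
  have "cnj (sgn y) * y = (cnj y * y) / of_real (cmod y)" unfolding 1 by simp
  also have "\<dots> = of_real (cmod y)" unfolding 2 using False by (simp add: power2_eq_square)
  finally show ?thesis .
qed simp

lemma cmod_sgn_comb:
  fixes x y :: complex
  defines "\<omega> \<equiv> (if x = 0 \<or> y = 0 then 1 else sgn x * cnj (sgn y))"
  shows "cmod (x + \<omega> * y) = cmod x + cmod y" and "cmod \<omega> = 1"
proof -
  show "cmod \<omega> = 1" unfolding \<omega>_def by (auto simp: norm_mult norm_sgn)
  show "cmod (x + \<omega> * y) = cmod x + cmod y"
  proof (cases "x = 0 \<or> y = 0")
    case True then show ?thesis unfolding \<omega>_def by auto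
  next
    case False
    have hx: "sgn x * of_real (cmod x) = x" using False by (simp add: sgn_eq)
    have "x + \<omega> * y = x + sgn x * (cnj (sgn y) * y)" using False by (simp add: \<omega>_def mult.assoc)
    also have "\<dots> = sgn x * of_real (cmod x) + sgn x * of_real (cmod y)" by (simp only: cnj_sgn_mult hx)
    also have "\<dots> = sgn x * of_real (cmod x + cmod y)" by (simp add: distrib_left)
    finally show ?thesis using False by (simp add: norm_mult norm_sgn flip: of_real_add)
  qed
qed

lemma alpha_G:
  assumes hc: "hol_contractible \<alpha>" and n: "n \<ge> 2" and r: "r \<ge> 1" and X: "X \<in> cvec n"
  shows "\<alpha> n (Gset n r) zv X = NG r X"
proof (rule antisym)
  have n1: "n \<ge> 1" using n by simp
  have dom: "cdomain n (Gset n r)" by (rule Gset_domain[OF n r])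
  have z: "zv \<in> Gset n r" using zv_Gset r by simp
  have G: "cmod (z 0) < 1" "cmod (z 1) < r" "cmod (z 0) + cmod (z 1) / r < 3/2" if "z \<in> Gset n r" for z
    using that unfolding Gset_def by auto
  show "\<alpha> n (Gset n r) zv X \<le> NG r X"
  proof (rule le_of_all_gt)
    fix N assume N: "N > NG r X"
    have b: "cmod (X 0) < N" "cmod (X 1) / r < N" "(cmod (X 0) + cmod (X 1) / r) * (2/3) < N"
      using N unfolding NG_def by auto
    have Np: "N > 0" using b(1) by (smt (verit) norm_ge_zero)
    show "\<alpha> n (Gset n r) zv X \<le> N"
    proof (rule alpha_upper[OF hc n1 dom z X Np])
      fix l assume l: "l \<in> unit_disc"
      then have l0: "cmod (l 0) < 1" unfolding unit_disc_def by auto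
      have sc: "cmod (l 0 / of_real N * X i) = cmod (l 0) * (cmod (X i) / N)" for i
        using Np by (simp add: norm_mult norm_divide)
      have le: "cmod (l 0 / of_real N * X i) \<le> cmod (X i) / N" for i
        unfolding sc using l0 Np by (intro mult_left_le_one_le) auto
      have c0: "cmod (X 0) / N < 1" using b Np by simp
      have c1: "cmod (X 1) / N < r" using b Np r by (simp add: field_simps)
      have "(cmod (X 0) / N + (cmod (X 1) / N) / r) = ((cmod (X 0) + cmod (X 1) / r)) / N"
        by (simp add: add_divide_distrib)
      also have "\<dots> < 3/2" using b Np by (simp add: field_simps)
      finally have c2: "cmod (X 0) / N + (cmod (X 1) / N) / r < 3/2" .
      have "cmod (l 0 / of_real N * X 1) / r \<le> (cmod (X 1) / N) / r"
        by (rule divide_right_mono[OF le[of 1]]) (use r in simp)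
      then have c3: "cmod (l 0 / of_real N * X 0) + cmod (l 0 / of_real N * X 1) / r < 3/2"
        using le[of 0] c2 by linarith
      show "vscale (l 0 / of_real N) X \<in> Gset n r"
        unfolding Gset_def vscale_def mem_Collect_eq
      proof (intro conjI)
        show "(\<lambda>i. l 0 / complex_of_real N * X i) \<in> cvec n" using X by (auto simp: cvec_def)
        show "cmod (l 0 / complex_of_real N * X 0) < 1" using le[of 0] c0 by linarith
        show "cmod (l 0 / complex_of_real N * X 1) < r" using le[of 1] c1 by linarith
      qed (rule c3)
    qed
  qed
  have l1: "cmod (X 0) \<le> \<alpha> n (Gset n r) zv X"
    using alpha_lower[OF hc n1 dom z X, of "\<lambda>z. z 0"] G by (auto simp: vadd_def vscale_def)
  have l2: "cmod (X 1 / of_real r) \<le> \<alpha> n (Gset n r) zv X"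
    using r G by (intro alpha_lower[OF hc n1 dom z X, of "\<lambda>z. z 1 / of_real r"])
      (auto simp: vadd_def vscale_def add_divide_distrib norm_divide divide_less_eq)
  define \<omega> where "\<omega> = (if X 0 = 0 \<or> X 1 / of_real r = 0 then 1 else sgn (X 0) * cnj (sgn (X 1 / of_real r)))"
  have om: "cmod (X 0 + \<omega> * (X 1 / of_real r)) = cmod (X 0) + cmod (X 1 / of_real r)" "cmod \<omega> = 1"
    using cmod_sgn_comb[of "X 0" "X 1 / of_real r"] unfolding \<omega>_def by auto
  have l3: "cmod ((X 0 + \<omega> * (X 1 / of_real r)) * (2/3)) \<le> \<alpha> n (Gset n r) zv X"
  proof (rule alpha_lower[OF hc n1 dom z X])
    fix z assume "z \<in> Gset n r"
    note Gz = G[OF this]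
    have "cmod (z 0 + \<omega> * (z 1 / of_real r)) \<le> cmod (z 0) + cmod (z 1) / r"
      using norm_triangle_ineq[of "z 0" "\<omega> * (z 1 / of_real r)"] om(2) r
      by (simp add: norm_mult norm_divide)
    moreover have c23: "cmod ((2/3)::complex) = 2/3" by simp
    moreover have "cmod ((z 0 + \<omega> * (z 1 / of_real r)) * (2/3)) = cmod (z 0 + \<omega> * (z 1 / of_real r)) * (2/3)"
      by (simp only: norm_mult c23)
    ultimately show "cmod ((z 0 + \<omega> * (z 1 / of_real r)) * (2/3)) < 1"
      using Gz by linarith
  qed (auto simp: vadd_def vscale_def algebra_simps add_divide_distrib)
  have e1: "cmod (X 1 / of_real r) = cmod (X 1) / r" using r by (simp add: norm_divide)
  have c23: "cmod ((2/3)::complex) = 2/3" by simp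
  have "cmod ((X 0 + \<omega> * (X 1 / of_real r)) * (2/3)) = (cmod (X 0) + cmod (X 1) / r) * (2/3)"
    by (simp only: norm_mult c23 om(1) e1)
  then show "NG r X \<le> \<alpha> n (Gset n r) zv X"
    using l1 l2 l3 e1 unfolding NG_def by auto
qed

lemma alpha_D:
  assumes hc: "hol_contractible \<alpha>" and n: "n \<ge> 1" and X: "X \<in> cvec n"
  shows "\<alpha> n (Dset n) zv X = cmod (X 0)"
proof (rule antisym)
  have dom: "cdomain n (Dset n)" by (rule Dset_domain[OF n])
  have z: "zv \<in> Dset n" by (rule zv_Dset)
  show "\<alpha> n (Dset n) zv X \<le> cmod (X 0)"
  proof (rule le_of_all_gt)
    fix N assume N: "N > cmod (X 0)"
    have Np: "N > 0" using N by (smt (verit) norm_ge_zero)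
    show "\<alpha> n (Dset n) zv X \<le> N"
    proof (rule alpha_upper[OF hc n dom z X Np])
      fix l assume l: "l \<in> unit_disc"
      then have l0: "cmod (l 0) < 1" unfolding unit_disc_def by auto
      have "cmod (l 0 / of_real N * X 0) = cmod (l 0) * (cmod (X 0) / N)"
        using Np by (simp add: norm_mult norm_divide)
      also have "\<dots> \<le> cmod (X 0) / N" using l0 Np by (intro mult_left_le_one_le) auto
      also have "\<dots> < 1" using N Np by simp
      finally show "vscale (l 0 / of_real N) X \<in> Dset n"
        unfolding Dset_def vscale_def using X by (auto simp: cvec_def)
    qed
  qed
  show "cmod (X 0) \<le> \<alpha> n (Dset n) zv X"
    by (rule alpha_lower[OF hc n dom z X]) (auto simp: vadd_def vscale_def Dset_def)
qed



lemma hform_add_left: "hform n H (vadd X Y) Z = hform n H X Z + hform n H Y Z"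
  unfolding hform_def vadd_def by (simp add: algebra_simps sum.distrib)

lemma hform_scale_left: "hform n H (vscale c X) Z = c * hform n H X Z"
  unfolding hform_def vscale_def by (simp add: algebra_simps sum_distrib_left)

lemma hform_add_right: "hform n H Z (vadd X Y) = hform n H Z X + hform n H Z Y"
  unfolding hform_def vadd_def by (simp add: algebra_simps sum.distrib)

lemma hform_scale_right: "hform n H Z (vscale c X) = cnj c * hform n H Z X"
  unfolding hform_def vscale_def by (simp add: algebra_simps sum_distrib_left)

lemma hform_unit: "a < n \<Longrightarrow> b < n \<Longrightarrow> hform n H (unitvec a) (unitvec b) = H a b"
  unfolding hform_def unitvec_def by (simp add: if_distrib[of cnj] if_distrib[of "(*) _"] cong: if_cong)

lemma hform_reduce:
  assumes "k0 \<le> n"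
    and "\<And>i j. i < n \<Longrightarrow> j < n \<Longrightarrow> (i \<ge> k0 \<or> j \<ge> k0) \<Longrightarrow> H i j * X i * cnj (Y j) = 0"
  shows "hform n H X Y = hform k0 H X Y"
proof -
  have "hform n H X Y = (\<Sum>i<n. \<Sum>j<k0. H i j * X i * cnj (Y j))"
    unfolding hform_def
  proof (rule sum.cong[OF refl], rule sum.mono_neutral_right)
    fix i assume "i \<in> {..<n}"
    then show "\<forall>j\<in>{..<n} - {..<k0}. H i j * X i * cnj (Y j) = 0" using assms(2) by auto
  qed (use assms(1) in auto)
  also have "\<dots> = (\<Sum>i<k0. \<Sum>j<k0. H i j * X i * cnj (Y j))"
  proof (rule sum.mono_neutral_right)
    show "\<forall>i\<in>{..<n} - {..<k0}. (\<Sum>j<k0. H i j * X i * cnj (Y j)) = 0"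
      using assms by (auto intro!: sum.neutral)
  qed (use assms(1) in auto)
  finally show ?thesis unfolding hform_def .
qed
lemma hform_reduce_cvec:
  assumes "k0 \<le> n" "X \<in> cvec k0" "Y \<in> cvec k0"
  shows "hform n H X Y = hform k0 H X Y"
  using assms by (intro hform_reduce) (auto simp: cvec_def)

lemma hform_reduce_H:
  assumes "k0 \<le> n" "\<And>i j. (i \<ge> k0 \<or> j \<ge> k0) \<Longrightarrow> H i j = 0"
  shows "hform n H X Y = hform k0 H X Y"
  using assms by (intro hform_reduce) auto

lemma hform2: "hform 2 H X Y = H 0 0 * X 0 * cnj (Y 0) + H 0 1 * X 0 * cnj (Y 1)
   + H 1 0 * X 1 * cnj (Y 0) + H 1 1 * X 1 * cnj (Y 1)"
  unfolding hform_def by (simp add: numeral_2_eq_2 lessThan_Suc)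

lemma hform1: "hform 1 H X Y = H 0 0 * X 0 * cnj (Y 0)"
  unfolding hform_def by (simp add: lessThan_Suc)

lemma psd_diag_real: "psd_hermitian n H \<Longrightarrow> H i i = of_real (Re (H i i))"
  unfolding psd_hermitian_def by (metis cnj.simps(2) complex_eq_iff complex_is_Real_iff neg_equal_zero of_real_Re)

lemma psd_diag_nonneg: "psd_hermitian n H \<Longrightarrow> i < n \<Longrightarrow> Re (H i i) \<ge> 0"
proof -
  assume "psd_hermitian n H" "i < n"
  then have "Re (hform n H (unitvec i) (unitvec i)) \<ge> 0" unfolding psd_hermitian_def
    using unitvec_cvec by blast
  then show ?thesis using hform_unit \<open>i < n\<close> by metis
qed


lemma hform_two:
  assumes "i < n" "j < n"
  shows "hform n H (vadd (vscale t (unitvec j)) (vscale u (unitvec i))) (vadd (vscale t (unitvec j)) (vscale u (unitvec i)))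
    = t * cnj t * H j j + t * cnj u * H j i + u * cnj t * H i j + u * cnj u * H i i"
  using assms by (simp add: hform_add_left hform_add_right hform_scale_left hform_scale_right hform_unit algebra_simps)

lemma vec_two_cvec: "i < n \<Longrightarrow> j < n \<Longrightarrow> vadd (vscale t (unitvec j)) (vscale u (unitvec i)) \<in> cvec n"
  unfolding vadd_def vscale_def unitvec_def cvec_def by auto

lemma Fset_zero:
  assumes H: "H \<in> F_set n \<eta> a" and k0: "k0 \<le> n"
    and V0: "\<And>X. X \<in> cvec n \<Longrightarrow> (\<forall>i<k0. X i = 0) \<Longrightarrow> \<eta> a X = 0"
    and ij: "i \<ge> k0 \<or> j \<ge> k0"
  shows "H i j = 0"
proof -
  have psd: "psd_hermitian n H" and bd: "\<And>X. X \<in> cvec n \<Longrightarrow> sqrt (Re (hform n H X X)) \<le> \<eta> a X"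
    using H unfolding F_set_def by auto
  have P1: "\<And>i j. (i \<ge> n \<or> j \<ge> n) \<Longrightarrow> H i j = 0" and P2: "\<And>i j. H j i = cnj (H i j)"
    and P3: "\<And>X. X \<in> cvec n \<Longrightarrow> Re (hform n H X X) \<ge> 0"
    using psd unfolding psd_hermitian_def by blast+
  have K: "H j i = 0" if i: "k0 \<le> i" "i < n" for i j
  proof (cases "j < n")
    case False then show ?thesis using P1 by auto
  next
    case j: True
    have "Re (H i i) \<le> 0"
    proof -
      have "unitvec i \<in> cvec n" using i by (simp add: unitvec_cvec)
      moreover have "\<forall>l<k0. unitvec i l = 0" using i unfolding unitvec_def by auto
      ultimately have "sqrt (Re (hform n H (unitvec i) (unitvec i))) \<le> 0" using bd V0 by fastforce
      then show ?thesis using hform_unit[of i n i H] i by simp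
    qed
    then have Hii: "H i i = 0" using psd_diag_nonneg[OF psd, of i] psd_diag_real[OF psd, of i] i
      by (metis antisym of_real_0)
    show ?thesis
    proof (cases "j = i")
      case True then show ?thesis using Hii by simp
    next
      case False
      define w where "w = H j i"
      define h where "h = Re (H j j)"
      have h: "h \<ge> 0" unfolding h_def using psd_diag_nonneg[OF psd j] .
      have Hjj: "H j j = of_real h" unfolding h_def using psd_diag_real[OF psd] .
      define s where "s = 1 / (h + 1)"
      have s: "s > 0" "s * h < 1" using h unfolding s_def by (auto simp: field_simps)
      define t where "t = - of_real s * cnj w"
      obtain x y where w: "w = Complex x y" by (metis complex.exhaust_sel)
      have "Re (hform n H (vadd (vscale t (unitvec j)) (vscale 1 (unitvec i))) (vadd (vscale t (unitvec j)) (vscale 1 (unitvec i)))) \<ge> 0"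
        using P3 vec_two_cvec[OF i(2) j] by blast
      also have "hform n H (vadd (vscale t (unitvec j)) (vscale 1 (unitvec i))) (vadd (vscale t (unitvec j)) (vscale 1 (unitvec i)))
         = t * cnj t * H j j + t * H j i + cnj t * H i j + H i i"
        using hform_two[OF i(2) j] by simp
      also have "H i j = cnj w" unfolding w_def using P2 by (metis complex_cnj_cnj)
      finally have "0 \<le> Re (t * cnj t * of_real h + t * w + cnj t * cnj w)"
        using Hii Hjj w_def by simp
      also have "Re (t * cnj t * of_real h + t * w + cnj t * cnj w) = (x\<^sup>2 + y\<^sup>2) * (s\<^sup>2 * h - 2 * s)"
        unfolding t_def w by (simp add: algebra_simps power2_eq_square)
      finally have ge: "0 \<le> (x\<^sup>2 + y\<^sup>2) * (s\<^sup>2 * h - 2 * s)" .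
      have "s\<^sup>2 * h - 2 * s < 0"
      proof -
        have "s\<^sup>2 * h - 2 * s = s * (s * h - 2)" by (simp add: algebra_simps power2_eq_square)
        also have "\<dots> < 0" using s by (intro mult_pos_neg) auto
        finally show ?thesis .
      qed
      with ge have "x\<^sup>2 + y\<^sup>2 \<le> 0" by (simp add: zero_le_mult_iff)
      then have "x = 0" "y = 0" by (smt (verit) zero_le_power2 power_zero_numeral zero_eq_power2)+
      then show ?thesis using w w_def by (simp add: complex_eq_iff)
    qed
  qed
  show ?thesis
  proof (cases "j \<ge> k0")
    case True
    show ?thesis
    proof (cases "j < n")
      case True then show ?thesis using K \<open>j \<ge> k0\<close> by blast
    qed (use P1 in auto)
  next
    case False
    then have "i \<ge> k0" using ij by auto
    show ?thesis
    proof (cases "i < n")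
      case True
      then have "H j i = 0" using K \<open>i \<ge> k0\<close> by blast
      then show ?thesis using P2[of j i] by simp
    qed (use P1 in auto)
  qed
qed



lemma seminorm_coord: "c \<ge> 0 \<Longrightarrow> cseminorm n (\<lambda>X. c * cmod (X k))"
  unfolding cseminorm_def vadd_def vscale_def
  by (auto simp: norm_mult norm_triangle_ineq distrib_left[symmetric] intro!: mult_left_mono)

lemma hat_pos:
  assumes "cseminorm n p" "\<forall>Y\<in>cvec n. p Y \<le> \<eta> a Y" "X \<in> cvec n" "p X > 0"
  shows "hat_metric n \<eta> a X > 0"
proof -
  let ?S = "{p X | p. cseminorm n p \<and> (\<forall>Y\<in>cvec n. p Y \<le> \<eta> a Y)}"
  have "bdd_above ?S" using assms(3) by (intro bdd_aboveI[of _ "\<eta> a X"]) auto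
  moreover have "p X \<in> ?S" using assms by auto
  ultimately have "p X \<le> Sup ?S" by (rule cSup_upper[rotated])
  then show ?thesis unfolding hat_metric_def using assms(4) by simp
qed

lemma hat_zero:
  assumes "X \<in> cvec n" "\<eta> a X = 0" "\<forall>Y\<in>cvec n. \<eta> a Y \<ge> 0"
  shows "hat_metric n \<eta> a X = 0"
proof -
  let ?S = "{p X | p. cseminorm n p \<and> (\<forall>Y\<in>cvec n. p Y \<le> \<eta> a Y)}"
  have z: "cseminorm n (\<lambda>_. 0)" unfolding cseminorm_def by auto
  have "?S \<subseteq> {0}"
  proof
    fix v assume "v \<in> ?S"
    then obtain p where p: "v = p X" "cseminorm n p" "\<forall>Y\<in>cvec n. p Y \<le> \<eta> a Y" by blast
    then have "p X \<ge> 0" using assms(1) unfolding cseminorm_def by blast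
    moreover have "p X \<le> 0" using p(3) assms by auto
    ultimately show "v \<in> {0}" using p by simp
  qed
  moreover have "0 \<in> ?S"
  proof -
    show ?thesis by (rule CollectI, rule exI[of _ "\<lambda>_. 0"]) (use z assms(3) in auto)
  qed
  ultimately have "?S = {0}" by blast
  then show ?thesis unfolding hat_metric_def by simp
qed

lemma V_char:
  assumes k0: "k0 \<le> n"
    and A: "\<And>X. X \<in> cvec n \<Longrightarrow> (\<forall>i<k0. X i = 0) \<Longrightarrow> \<eta> a X = 0"
    and B: "\<And>i. i < k0 \<Longrightarrow> \<exists>c>0. \<forall>Y\<in>cvec n. c * cmod (Y i) \<le> \<eta> a Y"
    and nn: "\<forall>Y\<in>cvec n. \<eta> a Y \<ge> 0"
  shows "V_set n \<eta> a = {X \<in> cvec n. \<forall>i<k0. X i = 0}"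
proof (intro set_eqI iffI)
  fix X assume X: "X \<in> V_set n \<eta> a"
  then have Xc: "X \<in> cvec n" and h0: "hat_metric n \<eta> a X = 0" unfolding V_set_def by auto
  have "X i = 0" if i: "i < k0" for i
  proof (rule ccontr)
    assume ne: "X i \<noteq> 0"
    obtain c where c: "c > 0" "\<forall>Y\<in>cvec n. c * cmod (Y i) \<le> \<eta> a Y" using B[OF i] by blast
    have "hat_metric n \<eta> a X > 0"
    proof (rule hat_pos[where p="\<lambda>X. c * cmod (X i)"])
      show "cseminorm n (\<lambda>X. c * cmod (X i))" using c by (intro seminorm_coord) simp
    qed (use c ne Xc in auto)
    then show False using h0 by simp
  qed
  then show "X \<in> {X \<in> cvec n. \<forall>i<k0. X i = 0}" using Xc by auto
next
  fix X assume "X \<in> {X \<in> cvec n. \<forall>i<k0. X i = 0}"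
  then show "X \<in> V_set n \<eta> a" unfolding V_set_def using A hat_zero nn by auto
qed

lemma cinner_unit: "i < n \<Longrightarrow> cinner n (unitvec i) Y = cnj (Y i)"
  unfolding cinner_def unitvec_def by (simp add: if_distrib[of "\<lambda>x. x * _"] cong: if_cong)

lemma U_char:
  assumes V: "V_set n \<eta> a = {X \<in> cvec n. \<forall>i<k0. X i = 0}" and k0: "k0 \<le> n"
  shows "U_set n \<eta> a = cvec k0"
proof (intro set_eqI iffI)
  fix Y assume Y: "Y \<in> U_set n \<eta> a"
  then have Yc: "Y \<in> cvec n" and orth: "\<forall>X\<in>V_set n \<eta> a. cinner n X Y = 0"
    unfolding U_set_def by auto
  have "Y i = 0" if i: "i \<ge> k0" for i
  proof (cases "i < n")
    case True
    have "unitvec i \<in> V_set n \<eta> a" unfolding V using True i unitvec_cvec[OF True]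
      by (auto simp: unitvec_def)
    then have "cinner n (unitvec i) Y = 0" using orth by blast
    then show ?thesis using cinner_unit[OF True] by simp
  next
    case False then show ?thesis using Yc unfolding cvec_def by auto
  qed
  then show "Y \<in> cvec k0" unfolding cvec_def by auto
next
  fix Y assume Y: "Y \<in> cvec k0"
  then have Yc: "Y \<in> cvec n" using k0 unfolding cvec_def by auto
  have "cinner n X Y = 0" if "X \<in> V_set n \<eta> a" for X
  proof -
    have "\<forall>i<k0. X i = 0" using that unfolding V by auto
    have "X i * cnj (Y i) = 0" for i
    proof (cases "i < k0")
      case True then show ?thesis using \<open>\<forall>i<k0. X i = 0\<close> by simp
    next
      case False then show ?thesis using Y unfolding cvec_def by simp
    qed
    then show ?thesis unfolding cinner_def by (simp add: sum.neutral)
  qed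
  then show "Y \<in> U_set n \<eta> a" unfolding U_set_def using Yc by auto
qed



lemma sum_unit: "(\<Sum>j<k. c j * unitvec j i) = (if i < k then c i else 0)"
proof -
  have "(\<Sum>j<k. c j * unitvec j i) = (\<Sum>j<k. if j = i then c i else 0)"
    by (rule sum.cong) (auto simp: unitvec_def)
  then show ?thesis by simp
qed

lemma basis_std: "is_basis n (cvec k0) k0 unitvec"
  unfolding is_basis_def
proof (intro conjI allI impI ballI)
  show "\<And>j. j < k0 \<Longrightarrow> unitvec j \<in> cvec k0" by (rule unitvec_cvec)
  fix c assume "\<forall>i. (\<Sum>j<k0. c j * unitvec j i) = 0"
  then show "\<And>j. j < k0 \<Longrightarrow> c j = 0" unfolding sum_unit by metis
next
  fix Y assume Y: "Y \<in> cvec k0"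
  show "\<exists>c. Y = (\<lambda>i. \<Sum>j<k0. c j * unitvec j i)"
    by (rule exI[of _ Y]) (use Y in \<open>auto simp: sum_unit cvec_def\<close>)
qed

lemma sum3:
  fixes k :: nat
  assumes "k \<ge> 3"
  shows "(\<Sum>j<k. (if j = 0 then x0 else if j = 1 then x1 else if j = 2 then x2 else 0) * f j)
     = x0 * f 0 + x1 * f 1 + x2 * (f 2 :: complex)"
proof -
  have "(\<Sum>j<k. (if j = 0 then x0 else if j = 1 then x1 else if j = 2 then x2 else 0) * f j)
     = (\<Sum>j<3. (if j = 0 then x0 else if j = 1 then x1 else if j = 2 then x2 else 0) * f j)"
    by (rule sum.mono_neutral_right) (use assms in auto)
  also have "\<dots> = x0 * f 0 + x1 * f 1 + x2 * f 2" by (simp add: numeral_3_eq_3 numeral_2_eq_2 lessThan_Suc)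
  finally show ?thesis .
qed

lemma sum2:
  fixes k :: nat
  assumes "k \<ge> 2"
  shows "(\<Sum>j<k. (if j = 0 then x0 else if j = 1 then x1 else 0) * f j)
     = x0 * f 0 + x1 * (f 1 :: complex)"
proof -
  have "(\<Sum>j<k. (if j = 0 then x0 else if j = 1 then x1 else 0) * f j)
     = (\<Sum>j<2. (if j = 0 then x0 else if j = 1 then x1 else 0) * f j)"
    by (rule sum.mono_neutral_right) (use assms in auto)
  also have "\<dots> = x0 * f 0 + x1 * f 1" by (simp add: numeral_2_eq_2 lessThan_Suc)
  finally show ?thesis .
qed

lemma basis_dim2:
  assumes B: "is_basis n (cvec 2) k e"
  shows "k = 2"
proof -
  have mem: "\<And>j. j < k \<Longrightarrow> e j \<in> cvec 2"
    and ind: "\<And>c. (\<forall>i. (\<Sum>j<k. c j * e j i) = 0) \<Longrightarrow> (\<forall>j<k. c j = 0)"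
    and span: "\<And>Y. Y \<in> cvec 2 \<Longrightarrow> \<exists>c. Y = (\<lambda>i. \<Sum>j<k. c j * e j i)"
    using B unfolding is_basis_def by blast+
  have u0: "unitvec 0 \<in> cvec 2" "unitvec 1 \<in> cvec 2" by (auto intro: unitvec_cvec)
  consider "k = 0" | "k = 1" | "k = 2" | "k \<ge> 3" by linarith
  then show ?thesis
  proof cases
    case 1
    obtain c where "unitvec 0 = (\<lambda>i. \<Sum>j<k. c j * e j i)" using span[OF u0(1)] by blast
    then have "unitvec 0 0 = 0" using 1 by simp
    then show ?thesis by (simp add: unitvec_def)
  next
    case 2
    obtain c where c: "unitvec 0 = (\<lambda>i. \<Sum>j<k. c j * e j i)" using span[OF u0(1)] by blast
    obtain d where d: "unitvec 1 = (\<lambda>i. \<Sum>j<k. d j * e j i)" using span[OF u0(2)] by blast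
    have "1 = c 0 * e 0 0" "0 = c 0 * e 0 1" "0 = d 0 * e 0 0" "1 = d 0 * e 0 1"
      using fun_cong[OF c, of 0] fun_cong[OF c, of 1] fun_cong[OF d, of 0] fun_cong[OF d, of 1] 2
      by (auto simp: unitvec_def)
    then show ?thesis by (metis mult_eq_0_iff zero_neq_one)
  next
    case 3 then show ?thesis .
  next
    case 4
    have key: "x0 = 0 \<and> x1 = 0 \<and> x2 = 0"
      if h0: "x0 * e 0 0 + x1 * e 1 0 + x2 * e 2 0 = 0" and h1: "x0 * e 0 1 + x1 * e 1 1 + x2 * e 2 1 = 0"
      for x0 x1 x2
    proof -
      define c where "c = (\<lambda>j::nat. if j = 0 then x0 else if j = 1 then x1 else if j = 2 then x2 else 0)"
      have "\<forall>i. (\<Sum>j<k. c j * e j i) = 0"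
      proof
        fix i
        have "(\<Sum>j<k. c j * e j i) = x0 * e 0 i + x1 * e 1 i + x2 * e 2 i"
          unfolding c_def by (rule sum3[OF 4])
        moreover have "i \<ge> 2 \<Longrightarrow> e 0 i = 0 \<and> e 1 i = 0 \<and> e 2 i = 0"
          using mem[of 0] mem[of 1] mem[of 2] 4 unfolding cvec_def by auto
        ultimately show "(\<Sum>j<k. c j * e j i) = 0" using h0 h1
          by (cases "i = 0"; cases "i = 1") auto
      qed
      from ind[OF this] 4 have "c 0 = 0" "c 1 = 0" "c 2 = 0" by auto
      then show ?thesis unfolding c_def by simp
    qed
    define a0 a1 b0 b1 d0 d1 where "a0 = e 0 0" "a1 = e 0 1" "b0 = e 1 0" "b1 = e 1 1" "d0 = e 2 0" "d1 = e 2 1"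
    note key' = key[unfolded a0_a1_b0_b1_d0_d1_def[symmetric]]
    show ?thesis
    proof (cases "a0 * b1 - a1 * b0 = 0")
      case False
      have "d0 * b1 - d1 * b0 = 0 \<and> a0 * d1 - a1 * d0 = 0 \<and> - (a0 * b1 - a1 * b0) = 0"
        by (rule key') (simp_all add: algebra_simps)
      then show ?thesis using False by simp
    next
      case det0: True
      show ?thesis
      proof (cases "a0 = 0")
        case a0: True
        show ?thesis
        proof (cases "a1 = 0")
          case True
          have "(1::complex) = 0 \<and> (0::complex) = 0 \<and> (0::complex) = 0" by (rule key') (use a0 True in simp_all)
          then show ?thesis by simp
        next
          case False
          have "b1 = 0 \<and> - a1 = 0 \<and> (0::complex) = 0"
            by (rule key') (use a0 det0 in \<open>simp_all add: algebra_simps\<close>)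
          then show ?thesis using False by simp
        qed
      next
        case False
        have "b0 = 0 \<and> - a0 = 0 \<and> (0::complex) = 0"
          by (rule key') (use det0 in \<open>simp_all add: algebra_simps\<close>)
        then show ?thesis using False by simp
      qed
    qed
  qed
qed

lemma basis_dim1:
  assumes B: "is_basis n (cvec 1) k e"
  shows "k = 1"
proof -
  have mem: "\<And>j. j < k \<Longrightarrow> e j \<in> cvec 1"
    and ind: "\<And>c. (\<forall>i. (\<Sum>j<k. c j * e j i) = 0) \<Longrightarrow> (\<forall>j<k. c j = 0)"
    and span: "\<And>Y. Y \<in> cvec 1 \<Longrightarrow> \<exists>c. Y = (\<lambda>i. \<Sum>j<k. c j * e j i)"
    using B unfolding is_basis_def by blast+
  have u0: "unitvec 0 \<in> cvec 1" by (auto intro: unitvec_cvec)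
  consider "k = 0" | "k = 1" | "k \<ge> 2" by linarith
  then show ?thesis
  proof cases
    case 1
    obtain c where "unitvec 0 = (\<lambda>i. \<Sum>j<k. c j * e j i)" using span[OF u0(1)] by blast
    then have "unitvec 0 0 = 0" using 1 by simp
    then show ?thesis by (simp add: unitvec_def)
  next
    case 2 then show ?thesis .
  next
    case 3
    have key: "x0 = 0 \<and> x1 = 0"
      if h0: "x0 * e 0 0 + x1 * e 1 0 = 0" for x0 x1
    proof -
      define c where "c = (\<lambda>j::nat. if j = 0 then x0 else if j = 1 then x1 else 0)"
      have "\<forall>i. (\<Sum>j<k. c j * e j i) = 0"
      proof
        fix i
        have "(\<Sum>j<k. c j * e j i) = x0 * e 0 i + x1 * e 1 i"
          unfolding c_def by (rule sum2[OF 3])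
        moreover have "i \<ge> 1 \<Longrightarrow> e 0 i = 0 \<and> e 1 i = 0"
          using mem[of 0] mem[of 1] 3 unfolding cvec_def by auto
        ultimately show "(\<Sum>j<k. c j * e j i) = 0" using h0
          by (cases "i = 0") auto
      qed
      from ind[OF this] 3 have "c 0 = 0" "c 1 = 0" by auto
      then show ?thesis unfolding c_def by simp
    qed
    show ?thesis
    proof (cases "e 0 0 = 0")
      case True
      have "(1::complex) = 0 \<and> (0::complex) = 0" by (rule key) (use True in simp)
      then show ?thesis by simp
    next
      case False
      have "e 1 0 = 0 \<and> - e 0 0 = 0" by (rule key) (simp add: algebra_simps)
      then show ?thesis using False by simp
    qed
  qed
qed

lemma cdim_cvec:
  assumes "k0 = 1 \<or> k0 = 2"
  shows "cdim n (cvec k0) = k0"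
  unfolding cdim_def
proof (rule the_equality)
  show "\<exists>e. is_basis n (cvec k0) k0 e" using basis_std by blast
  fix k assume "\<exists>e. is_basis n (cvec k0) k e"
  then show "k = k0" using assms basis_dim1 basis_dim2 by blast
qed



lemma real_key1:
  fixes A Bs bt :: real
  assumes "A \<ge> 0" "Bs \<ge> 0" "bt \<ge> 0" "4*A+4*bt+Bs \<le> 4" "A+4*bt+4*Bs \<le> 4"
  shows "4 * (A * Bs) - 4 * bt\<^sup>2 \<le> ((8 - 8*bt)/5)\<^sup>2 - 4*bt\<^sup>2"
proof -
  have S0: "5 * A + 5 * Bs \<le> 8 - 8*bt" using assms by linarith
  then have S: "A + Bs \<le> (8 - 8*bt)/5" by (simp add: field_simps)
  have q: "(A + Bs)\<^sup>2 - 4 * A * Bs = (A - Bs)\<^sup>2" by (simp add: power2_eq_square algebra_simps)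
  have "4 * A * Bs \<le> (A + Bs)\<^sup>2" using q zero_le_power2[of "A - Bs"] by linarith
  also have "(A + Bs)\<^sup>2 \<le> ((8 - 8*bt)/5)\<^sup>2" using S assms by (intro power_mono) auto
  finally show ?thesis by simp
qed

lemma real_key:
  fixes A Bs bt :: real
  assumes "A \<ge> 0" "Bs \<ge> 0" "bt \<ge> 0" "4*A+4*bt+Bs \<le> 4" "A+4*bt+4*Bs \<le> 4"
  shows "A * Bs - bt\<^sup>2 \<le> 16/25" and "A * Bs - bt\<^sup>2 \<ge> 16/25 \<Longrightarrow> bt = 0 \<and> A = 4/5 \<and> Bs = 4/5"
proof -
  note k = real_key1[OF assms]
  have e: "((8 - 8*bt)/5)\<^sup>2 - 4*bt\<^sup>2 = 64/25 - 128/25 * bt - 36/25 * bt\<^sup>2"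
    by (simp add: power2_eq_square field_simps)
  have p: "128/25 * bt + 36/25 * bt\<^sup>2 \<ge> 0" using assms(3) by simp
  show "A * Bs - bt\<^sup>2 \<le> 16/25" using k e p by linarith
  assume h: "A * Bs - bt\<^sup>2 \<ge> 16/25"
  have "128/25 * bt + 36/25 * bt\<^sup>2 \<le> 0" using k e h by linarith
  then have b0: "bt = 0" using assms(3) zero_le_power2[of bt] by linarith
  have S: "A + Bs \<le> 8/5" using assms b0 by linarith
  have AB: "A * Bs \<ge> 16/25" using h b0 by simp
  have "(A - Bs)\<^sup>2 = (A + Bs)\<^sup>2 - 4 * (A * Bs)" by (simp add: power2_eq_square algebra_simps)
  also have "(A + Bs)\<^sup>2 \<le> (8/5)\<^sup>2" using S assms by (intro power_mono) auto
  then have "(A + Bs)\<^sup>2 - 4 * (A * Bs) \<le> 0" using AB by (simp add: power2_eq_square)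
  finally have "(A - Bs)\<^sup>2 \<le> 0" .
  then have ABe: "A = Bs" by simp
  then have "A * A \<ge> 16/25" "A \<le> 4/5" using AB S by auto
  then have "A * A \<le> 4/5 * A" using assms(1) by (intro mult_right_mono) auto
  moreover have "4/5 * A \<le> 4/5 * (4/5)" using \<open>A \<le> 4/5\<close> by simp
  ultimately have "A = 4/5" using \<open>A * A \<ge> 16/25\<close> by linarith
  then show "bt = 0 \<and> A = 4/5 \<and> Bs = 4/5" using b0 ABe by simp
qed

lemma real_ellipse:
  fixes x v :: real
  assumes "x \<ge> 0" "v \<ge> 0"
  shows "4/5 * (x\<^sup>2 + v\<^sup>2) \<le> (max (max x v) ((x + v) * (2/3)))\<^sup>2"
proof -
  consider "2 * v \<le> x" | "2 * x \<le> v" | "x < 2 * v" "v < 2 * x" by linarith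
  then show ?thesis
  proof cases
    case 1
    have "v\<^sup>2 \<le> (x/2)\<^sup>2" using 1 assms by (intro power_mono) auto
    then have "4/5 * (x\<^sup>2 + v\<^sup>2) \<le> x\<^sup>2" by (simp add: power2_eq_square)
    also have "x\<^sup>2 \<le> (max (max x v) ((x + v) * (2/3)))\<^sup>2" using assms by (intro power_mono) auto
    finally show ?thesis .
  next
    case 2
    have "x\<^sup>2 \<le> (v/2)\<^sup>2" using 2 assms by (intro power_mono) auto
    then have "4/5 * (x\<^sup>2 + v\<^sup>2) \<le> v\<^sup>2" by (simp add: power2_eq_square)
    also have "v\<^sup>2 \<le> (max (max x v) ((x + v) * (2/3)))\<^sup>2" using assms by (intro power_mono) auto
    finally show ?thesis .
  next
    case 3
    have "(2 * x - v) * (x - 2 * v) \<le> 0" using 3 by (intro mult_nonneg_nonpos) auto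
    then have "4/5 * (x\<^sup>2 + v\<^sup>2) \<le> ((x + v) * (2/3))\<^sup>2" by (simp add: power2_eq_square algebra_simps)
    also have "\<dots> \<le> (max (max x v) ((x + v) * (2/3)))\<^sup>2" using assms by (intro power_mono) auto
    finally show ?thesis .
  qed
qed

lemma det_ident:
  fixes a b c d a' b' c' d' h00 h01 h10 h11 :: "'a::comm_ring_1"
  shows "(h00*a*a' + h01*a*b' + h10*b*a' + h11*b*b') * (h00*c*c' + h01*c*d' + h10*d*c' + h11*d*d')
   - (h00*a*c' + h01*a*d' + h10*b*c' + h11*b*d') * (h00*c*a' + h01*c*b' + h10*d*a' + h11*d*b')
   = (a*d - b*c)*(a'*d' - b'*c')*(h00*h11 - h01*h10)"
  by (simp add: algebra_simps)

lemma gram2: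
  assumes n: "2 \<le> n" and e: "e 0 \<in> cvec 2" "e 1 \<in> cvec 2"
  shows "gram_det n H 2 e = (cmod (e 0 0 * e 1 1 - e 0 1 * e 1 0))\<^sup>2 * Re (H 0 0 * H 1 1 - H 0 1 * H 1 0)"
proof -
  have r: "hform n H (e j) (e l) = hform 2 H (e j) (e l)" if "j \<in> {0,1}" "l \<in> {0,1}" for j l
    using that e by (intro hform_reduce_cvec[OF n]) auto
  define D where "D = e 0 0 * e 1 1 - e 0 1 * e 1 0"
  have "cdet 2 (\<lambda>j l. hform n H (e j) (e l)) = (D * cnj D) * (H 0 0 * H 1 1 - H 0 1 * H 1 0)"
    unfolding cdet2 using r[of 0 0] r[of 0 1] r[of 1 0] r[of 1 1]
    by (simp add: hform2 D_def det_ident)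
  also have "D * cnj D = of_real ((cmod D)\<^sup>2)" by (simp add: complex_norm_square del: of_real_power)
  finally show ?thesis unfolding gram_det_def D_def by simp
qed

lemma gram1:
  assumes n: "1 \<le> n" and e: "e 0 \<in> cvec 1"
  shows "gram_det n H 1 e = (cmod (e 0 0))\<^sup>2 * Re (H 0 0)"
proof -
  have r: "hform n H (e 0) (e 0) = hform 1 H (e 0) (e 0)"
    using e by (intro hform_reduce_cvec[OF n]) auto
  have "cdet 1 (\<lambda>j l. hform n H (e j) (e l)) = (e 0 0 * cnj (e 0 0)) * H 0 0"
    unfolding cdet1 r hform1 by (simp add: algebra_simps)
  also have "e 0 0 * cnj (e 0 0) = of_real ((cmod (e 0 0))\<^sup>2)" by (simp add: complex_norm_square del: of_real_power)
  finally show ?thesis unfolding gram_det_def by simp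
qed



lemma sqrt_le_sq: "sqrt x \<le> y \<Longrightarrow> 0 \<le> x \<Longrightarrow> x \<le> y\<^sup>2"
  by (metis real_sqrt_ge_zero power_mono real_sqrt_pow2)

lemma sq_le_sqrt: "x \<le> y\<^sup>2 \<Longrightarrow> 0 \<le> y \<Longrightarrow> sqrt x \<le> y"
  by (metis real_sqrt_abs real_sqrt_le_mono abs_of_nonneg)

lemma NG_nonneg: "NG r X \<ge> 0" unfolding NG_def by (simp add: le_max_iff_disj)

lemma test_vec:
  fixes t \<rho> :: real and b u :: complex
  assumes u: "u = (if b = 0 then 1 else sgn b)"
    and X: "X = vadd (vscale (of_real t) (unitvec 0)) (vscale (of_real \<rho> * u) (unitvec 1))"
  shows "X 0 = of_real t" "X 1 = of_real \<rho> * u" "cmod u = 1"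
    "\<And>A Bd. Re (of_real t * cnj (of_real t) * of_real A + of_real t * cnj (of_real \<rho> * u) * b
        + of_real \<rho> * u * cnj (of_real t) * cnj b + of_real \<rho> * u * cnj (of_real \<rho> * u) * of_real Bd)
       = t\<^sup>2 * A + 2 * t * \<rho> * cmod b + \<rho>\<^sup>2 * Bd"
proof -
  show "X 0 = of_real t" "X 1 = of_real \<rho> * u" unfolding X vadd_def vscale_def unitvec_def by auto
  show cu: "cmod u = 1" unfolding u by (auto simp: norm_sgn)
  obtain p q where pq: "u = Complex p q" by (metis complex.exhaust_sel)
  have p2: "p\<^sup>2 + q\<^sup>2 = 1" using cu unfolding pq cmod_def by simp
  have bu: "b = of_real (cmod b) * u"
  proof (cases "b = 0")
    case False then show ?thesis unfolding u by (simp add: sgn_eq)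
  qed simp
  fix A Bd
  define \<beta> where "\<beta> = cmod b"
  have b: "b = Complex (\<beta> * p) (\<beta> * q)" using bu unfolding pq \<beta>_def by (simp add: complex_eq_iff)
  show "Re (of_real t * cnj (of_real t) * of_real A + of_real t * cnj (of_real \<rho> * u) * b
        + of_real \<rho> * u * cnj (of_real t) * cnj b + of_real \<rho> * u * cnj (of_real \<rho> * u) * of_real Bd)
       = t\<^sup>2 * A + 2 * t * \<rho> * cmod b + \<rho>\<^sup>2 * Bd"
  proof -
    have "Re (of_real t * cnj (of_real t) * of_real A + of_real t * cnj (of_real \<rho> * u) * b
        + of_real \<rho> * u * cnj (of_real t) * cnj b + of_real \<rho> * u * cnj (of_real \<rho> * u) * of_real Bd)
      = t\<^sup>2 * A + 2 * t * \<rho> * \<beta> * (p\<^sup>2 + q\<^sup>2) + \<rho>\<^sup>2 * Bd * (p\<^sup>2 + q\<^sup>2)"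
      unfolding b pq by (simp add: algebra_simps power2_eq_square)
    then show ?thesis using p2 unfolding \<beta>_def by simp
  qed
qed


definition H2 :: "real \<Rightarrow> nat \<Rightarrow> nat \<Rightarrow> complex" where
  "H2 r = (\<lambda>i j. if i = 0 \<and> j = 0 then 4/5 else if i = 1 \<and> j = 1 then of_real (4 / (5 * r\<^sup>2)) else 0)"

lemma s_max_G:
  assumes n: "2 \<le> n" and r: "r \<ge> 1" and eta: "\<And>X. X \<in> cvec n \<Longrightarrow> \<eta> a X = NG r X"
  shows "s_max n \<eta> a = H2 r" and "m_index n \<eta> a = 2"
proof -
  have rpos: "r > 0" using r by simp
  have nn: "\<forall>Y\<in>cvec n. \<eta> a Y \<ge> 0" using eta NG_nonneg by simp
  have V0: "\<eta> a X = 0" if "X \<in> cvec n" "\<forall>i<2. X i = 0" for X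
    using that eta[OF that(1)] unfolding NG_def by auto
  have B: "\<exists>c>0. \<forall>Y\<in>cvec n. c * cmod (Y i) \<le> \<eta> a Y" if "i < 2" for i
  proof (cases "i = 0")
    case True then show ?thesis using eta unfolding NG_def by (intro exI[of _ 1]) auto
  next
    case False
    then have i: "i = 1" using that by simp
    show ?thesis
    proof (intro exI[of _ "1/r"] conjI ballI)
      show "1/r > 0" using rpos by simp
      fix Y assume "Y \<in> cvec n"
      then show "1 / r * cmod (Y i) \<le> \<eta> a Y" using eta i unfolding NG_def by auto
    qed
  qed
  have V: "V_set n \<eta> a = {X \<in> cvec n. \<forall>i<2. X i = 0}"
    by (rule V_char[of 2 n \<eta> a, OF n V0 B nn]) auto
  have U: "U_set n \<eta> a = cvec 2" by (rule U_char[OF V n])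
  show "m_index n \<eta> a = 2" unfolding m_index_def U by (rule cdim_cvec) simp
  have Fzero: "H i j = 0" if "H \<in> F_set n \<eta> a" "i \<ge> 2 \<or> j \<ge> 2" for H i j
    by (rule Fset_zero[OF that(1) n V0 that(2)]) auto
  define dt where "dt = (\<lambda>H::nat\<Rightarrow>nat\<Rightarrow>complex. Re (H 0 0 * H 1 1 - H 0 1 * H 1 0))"
  have Fdet: "dt H \<le> 16 / (25 * r\<^sup>2) \<and> (dt H \<ge> 16 / (25 * r\<^sup>2) \<longrightarrow> H = H2 r)"
    if HF: "H \<in> F_set n \<eta> a" for H
  proof -
    have psd: "psd_hermitian n H" and bd: "\<And>X. X \<in> cvec n \<Longrightarrow> sqrt (Re (hform n H X X)) \<le> \<eta> a X"
      using HF unfolding F_set_def by auto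
    have P2: "H 1 0 = cnj (H 0 1)" and P3: "\<And>X. X \<in> cvec n \<Longrightarrow> Re (hform n H X X) \<ge> 0"
      using psd unfolding psd_hermitian_def by blast+
    define A where "A = Re (H 0 0)"
    define Bd where "Bd = Re (H 1 1)"
    define b where "b = H 0 1"
    define u where "u = (if b = 0 then 1 else sgn b)"
    have HA: "H 0 0 = of_real A" unfolding A_def using psd_diag_real[OF psd] .
    have HB: "H 1 1 = of_real Bd" unfolding Bd_def using psd_diag_real[OF psd] .
    have A0: "A \<ge> 0" unfolding A_def using psd_diag_nonneg[OF psd] n by simp
    have B0: "Bd \<ge> 0" unfolding Bd_def using psd_diag_nonneg[OF psd] n by simp
    have test: "t\<^sup>2 * A + 2 * t * \<rho> * cmod b + \<rho>\<^sup>2 * Bd \<le> 4"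
      if tr: "t \<ge> 0" "\<rho> \<ge> 0" "NG r (vadd (vscale (of_real t) (unitvec 0)) (vscale (of_real \<rho> * u) (unitvec 1))) = 2"
      for t \<rho> :: real
    proof -
      define X where "X = vadd (vscale (of_real t) (unitvec 0)) (vscale (of_real \<rho> * u) (unitvec 1))"
      note tv = test_vec[OF u_def X_def]
      have Xc: "X \<in> cvec n" unfolding X_def by (rule vec_two_cvec) (use n in auto)
      have "hform n H X X = of_real t * cnj (of_real t) * H 0 0 + of_real t * cnj (of_real \<rho> * u) * H 0 1
         + of_real \<rho> * u * cnj (of_real t) * H 1 0 + of_real \<rho> * u * cnj (of_real \<rho> * u) * H 1 1"
        unfolding X_def by (rule hform_two) (use n in auto)
      then have "Re (hform n H X X) = t\<^sup>2 * A + 2 * t * \<rho> * cmod b + \<rho>\<^sup>2 * Bd"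
        using tv(4) unfolding HA HB P2 b_def[symmetric] by simp
      moreover have "sqrt (Re (hform n H X X)) \<le> 2" using bd[OF Xc] eta[OF Xc] tr(3) unfolding X_def by simp
      ultimately show ?thesis using sqrt_le_sq[of "Re (hform n H X X)" 2] P3[OF Xc] by simp
    qed
    have cu: "cmod u = 1" unfolding u_def by (auto simp: norm_sgn)
    have ng1: "NG r (vadd (vscale (of_real 2) (unitvec 0)) (vscale (of_real r * u) (unitvec 1))) = 2"
      using test_vec[where t=2 and \<rho>=r, OF u_def refl] cu rpos unfolding NG_def by (simp add: norm_mult)
    have ng2: "NG r (vadd (vscale (of_real 1) (unitvec 0)) (vscale (of_real (2 * r) * u) (unitvec 1))) = 2"
      using test_vec[where t=1 and \<rho>="2 * r", OF u_def refl] cu rpos unfolding NG_def by (simp add: norm_mult)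
    have t1: "4 * A + 4 * (r * cmod b) + r\<^sup>2 * Bd \<le> 4" using test[OF _ _ ng1] rpos by simp
    have t2: "A + 4 * (r * cmod b) + 4 * (r\<^sup>2 * Bd) \<le> 4" using test[OF _ _ ng2] rpos
      by (simp add: power_mult_distrib)
    note key = real_key[of A "r\<^sup>2 * Bd" "r * cmod b", OF A0 _ _ t1 t2]
    have dtH: "dt H = A * Bd - (cmod b)\<^sup>2"
      unfolding dt_def HA HB P2 b_def[symmetric] cmod_power2 by (simp add: power2_eq_square)
    have eq: "r\<^sup>2 * dt H = A * (r\<^sup>2 * Bd) - (r * cmod b)\<^sup>2" unfolding dtH by (simp add: algebra_simps power2_eq_square)
    have r2: "r\<^sup>2 > 0" using rpos by simp
    have k1: "A * (r\<^sup>2 * Bd) - (r * cmod b)\<^sup>2 \<le> 16/25" by (rule key(1)) (use B0 rpos in auto)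
    have "dt H \<le> 16 / (25 * r\<^sup>2)" using k1 eq r2 by (simp add: field_simps)
    moreover have "H = H2 r" if ge: "dt H \<ge> 16 / (25 * r\<^sup>2)"
    proof -
      have "A * (r\<^sup>2 * Bd) - (r * cmod b)\<^sup>2 \<ge> 16/25" using ge eq r2 by (simp add: field_simps)
      then have k2: "r * cmod b = 0 \<and> A = 4/5 \<and> r\<^sup>2 * Bd = 4/5" by (intro key(2)) (use B0 rpos in auto)
      then have b0: "b = 0" using rpos by simp
      have Bdv: "Bd = 4 / (5 * r\<^sup>2)" using k2 r2 by (simp add: field_simps)
      show ?thesis
      proof (intro ext)
        fix i j
        show "H i j = H2 r i j"
        proof (cases "i \<ge> 2 \<or> j \<ge> 2")
          case True then show ?thesis using Fzero[OF HF True] unfolding H2_def by auto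
        next
          case False
          then have "i = 0 \<or> i = 1" "j = 0 \<or> j = 1" by auto
          then show ?thesis using HA HB P2 b0 k2 Bdv unfolding H2_def b_def by auto
        qed
      qed
    qed
    ultimately show ?thesis by blast
  qed
  have dt2: "dt (H2 r) = 16 / (25 * r\<^sup>2)" unfolding dt_def H2_def by (simp add: power2_eq_square)
  have H2F: "H2 r \<in> F_set n \<eta> a"
  proof -
    have sup: "H2 r i j = 0" if "i \<ge> 2 \<or> j \<ge> 2" for i j using that unfolding H2_def by auto
    have hf: "hform n (H2 r) X X = of_real (4/5 * ((cmod (X 0))\<^sup>2 + (cmod (X 1) / r)\<^sup>2))" for X
    proof -
      have "hform n (H2 r) X X = hform 2 (H2 r) X X" by (rule hform_reduce_H[OF n sup]) auto
      also have "\<dots> = 4/5 * (X 0 * cnj (X 0)) + of_real (4 / (5 * r\<^sup>2)) * (X 1 * cnj (X 1))"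
        unfolding hform2 H2_def by (simp add: mult.assoc)
      also have "\<dots> = of_real (4/5 * ((cmod (X 0))\<^sup>2 + (cmod (X 1) / r)\<^sup>2))"
        using rpos by (simp add: complex_mult_cnj complex_norm_square power_divide algebra_simps del: of_real_power)
          (simp add: field_simps)
      finally show ?thesis .
    qed
    have psd: "psd_hermitian n (H2 r)" unfolding psd_hermitian_def
    proof (intro conjI allI impI ballI)
      fix i j assume "n \<le> i \<or> n \<le> j" then show "H2 r i j = 0" using sup n by auto
    next
      fix i j show "H2 r j i = cnj (H2 r i j)" unfolding H2_def by auto
    next
      fix X assume "X \<in> cvec n" then show "Re (hform n (H2 r) X X) \<ge> 0" unfolding hf by simp
    qed
    moreover have "sqrt (Re (hform n (H2 r) X X)) \<le> \<eta> a X" if X: "X \<in> cvec n" for X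
    proof -
      have "Re (hform n (H2 r) X X) \<le> (NG r X)\<^sup>2" unfolding hf NG_def using real_ellipse[of "cmod (X 0)" "cmod (X 1) / r"] rpos
        by simp
      then show ?thesis unfolding eta[OF X] by (rule sq_le_sqrt) (rule NG_nonneg)
    qed
    ultimately show ?thesis unfolding F_set_def by auto
  qed
  have prec: "form_prec n \<eta> a H (H2 r)" if HF: "H \<in> F_set n \<eta> a" for H
    unfolding form_prec_def U
  proof (intro allI impI)
    fix k e assume be: "is_basis n (cvec 2) k e"
    then have k: "k = 2" by (rule basis_dim2)
    have e: "e 0 \<in> cvec 2" "e 1 \<in> cvec 2" using be k unfolding is_basis_def by auto
    show "gram_det n H k e \<le> gram_det n (H2 r) k e"
      unfolding k gram2[OF n e] using Fdet[OF HF] dt2 unfolding dt_def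
      by (intro mult_left_mono) auto
  qed
  show "s_max n \<eta> a = H2 r" unfolding s_max_def
  proof (rule the_equality)
    show "H2 r \<in> F_set n \<eta> a \<and> (\<forall>H'\<in>F_set n \<eta> a. form_prec n \<eta> a H' (H2 r))" using H2F prec by blast
    fix H assume H: "H \<in> F_set n \<eta> a \<and> (\<forall>H'\<in>F_set n \<eta> a. form_prec n \<eta> a H' H)"
    then have "form_prec n \<eta> a (H2 r) H" using H2F by blast
    then have "gram_det n (H2 r) 2 unitvec \<le> gram_det n H 2 unitvec"
      unfolding form_prec_def U using basis_std by blast
    moreover have "e0c": "unitvec 0 \<in> cvec 2" "unitvec 1 \<in> cvec 2" by (auto intro: unitvec_cvec)
    ultimately have "dt (H2 r) \<le> dt H" unfolding gram2[OF n e0c] dt_def by (simp add: unitvec_def)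
    then show "H = H2 r" using Fdet[of H] H dt2 by auto
  qed
qed



definition H1 :: "nat \<Rightarrow> nat \<Rightarrow> complex" where
  "H1 = (\<lambda>i j. if i = 0 \<and> j = 0 then 1 else 0)"

lemma s_max_D:
  assumes n: "1 \<le> n" and eta: "\<And>X. X \<in> cvec n \<Longrightarrow> \<eta> a X = cmod (X 0)"
  shows "s_max n \<eta> a = H1" and "m_index n \<eta> a = 1"
proof -
  have nn: "\<forall>Y\<in>cvec n. \<eta> a Y \<ge> 0" using eta by simp
  have V0: "\<eta> a X = 0" if "X \<in> cvec n" "\<forall>i<1. X i = 0" for X
    using that eta[OF that(1)] by auto
  have B: "\<exists>c>0. \<forall>Y\<in>cvec n. c * cmod (Y i) \<le> \<eta> a Y" if "i < 1" for i
    using that eta by (intro exI[of _ 1]) auto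
  have V: "V_set n \<eta> a = {X \<in> cvec n. \<forall>i<1. X i = 0}"
    by (rule V_char[of 1 n \<eta> a, OF n V0 B nn]) auto
  have U: "U_set n \<eta> a = cvec 1" by (rule U_char[OF V n])
  show "m_index n \<eta> a = 1" unfolding m_index_def U by (rule cdim_cvec) simp
  have Fzero: "H i j = 0" if "H \<in> F_set n \<eta> a" "i \<ge> 1 \<or> j \<ge> 1" for H i j
    by (rule Fset_zero[OF that(1) n V0 that(2)]) auto
  have Fdet: "Re (H 0 0) \<le> 1 \<and> (Re (H 0 0) \<ge> 1 \<longrightarrow> H = H1)" if HF: "H \<in> F_set n \<eta> a" for H
  proof -
    have psd: "psd_hermitian n H" and bd: "\<And>X. X \<in> cvec n \<Longrightarrow> sqrt (Re (hform n H X X)) \<le> \<eta> a X"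
      using HF unfolding F_set_def by auto
    have e0: "unitvec 0 \<in> cvec n" using n by (simp add: unitvec_cvec)
    have "sqrt (Re (H 0 0)) \<le> 1" using bd[OF e0] eta[OF e0] hform_unit[of 0 n 0 H] n
      by (simp add: unitvec_def)
    then have le: "Re (H 0 0) \<le> 1" using sqrt_le_sq[of "Re (H 0 0)" 1] psd_diag_nonneg[OF psd, of 0] n by simp
    moreover have "H = H1" if "Re (H 0 0) \<ge> 1"
    proof (intro ext)
      fix i j
      show "H i j = H1 i j"
      proof (cases "i \<ge> 1 \<or> j \<ge> 1")
        case True then show ?thesis using Fzero[OF HF True] unfolding H1_def by auto
      next
        case False
        then have "i = 0" "j = 0" by auto
        moreover have "Re (H 0 0) = 1" using le that by simp
        ultimately show ?thesis using psd_diag_real[OF psd, of 0] unfolding H1_def by simp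
      qed
    qed
    ultimately show ?thesis by blast
  qed
  have H1F: "H1 \<in> F_set n \<eta> a"
  proof -
    have sup: "H1 i j = 0" if "i \<ge> 1 \<or> j \<ge> 1" for i j using that unfolding H1_def by auto
    have hf: "hform n H1 X X = of_real ((cmod (X 0))\<^sup>2)" for X
    proof -
      have "hform n H1 X X = hform 1 H1 X X" by (rule hform_reduce_H[OF n sup]) auto
      also have "\<dots> = X 0 * cnj (X 0)" unfolding hform1 H1_def by simp
      also have "\<dots> = of_real ((cmod (X 0))\<^sup>2)" by (simp add: complex_norm_square del: of_real_power)
      finally show ?thesis .
    qed
    have psd: "psd_hermitian n H1" unfolding psd_hermitian_def
    proof (intro conjI allI impI ballI)
      fix i j assume "n \<le> i \<or> n \<le> j" then show "H1 i j = 0" using sup n by auto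
    next
      fix i j show "H1 j i = cnj (H1 i j)" unfolding H1_def by auto
    next
      fix X assume "X \<in> cvec n" then show "Re (hform n H1 X X) \<ge> 0" unfolding hf by simp
    qed
    moreover have "sqrt (Re (hform n H1 X X)) \<le> \<eta> a X" if X: "X \<in> cvec n" for X
      unfolding hf eta[OF X] by simp
    ultimately show ?thesis unfolding F_set_def by auto
  qed
  have prec: "form_prec n \<eta> a H H1" if HF: "H \<in> F_set n \<eta> a" for H
    unfolding form_prec_def U
  proof (intro allI impI)
    fix k e assume be: "is_basis n (cvec 1) k e"
    then have k: "k = 1" by (rule basis_dim1)
    have e: "e 0 \<in> cvec 1" using be k unfolding is_basis_def by auto
    show "gram_det n H k e \<le> gram_det n H1 k e"
      unfolding k gram1[where e=e, OF n e] using Fdet[OF HF] unfolding H1_def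
      by (intro mult_left_mono) auto
  qed
  show "s_max n \<eta> a = H1" unfolding s_max_def
  proof (rule the_equality)
    show "H1 \<in> F_set n \<eta> a \<and> (\<forall>H'\<in>F_set n \<eta> a. form_prec n \<eta> a H' H1)" using H1F prec by blast
    fix H assume H: "H \<in> F_set n \<eta> a \<and> (\<forall>H'\<in>F_set n \<eta> a. form_prec n \<eta> a H' H)"
    then have "form_prec n \<eta> a H1 H" using H1F by blast
    then have "gram_det n H1 1 unitvec \<le> gram_det n H 1 unitvec"
      unfolding form_prec_def U using basis_std by blast
    moreover have e0c: "unitvec 0 \<in> cvec 1" by (auto intro: unitvec_cvec)
    ultimately have "1 \<le> Re (H 0 0)" unfolding gram1[where e=unitvec, OF n e0c] by (simp add: unitvec_def H1_def)
    then show "H = H1" using Fdet[of H] H by auto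
  qed
qed

lemma Wu_tilde_e0: "0 < n \<Longrightarrow> Wu_tilde n \<eta> a (unitvec 0) = sqrt (Re (s_max n \<eta> a 0 0))"
  unfolding Wu_tilde_def by (simp add: hform_unit)



lemma Gset_mono: "r \<le> r' \<Longrightarrow> r > 0 \<Longrightarrow> Gset n r \<subseteq> Gset n r'"
proof
  fix z assume rr: "r \<le> r'" "r > 0" and z: "z \<in> Gset n r"
  have "cmod (z 1) / r' \<le> cmod (z 1) / r" using rr by (intro divide_left_mono) auto
  moreover have "cmod (z 0) + cmod (z 1) / r < 3/2" "cmod (z 1) < r" "cmod (z 0) < 1" "z \<in> cvec n"
    using z unfolding Gset_def by auto
  ultimately have "cmod (z 0) + cmod (z 1) / r' < 3/2" "cmod (z 1) < r'" using rr by linarith+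
  then show "z \<in> Gset n r'" using \<open>cmod (z 0) < 1\<close> \<open>z \<in> cvec n\<close> unfolding Gset_def by blast
qed

theorem proposition3p7:
  fixes \<alpha> :: "nat \<Rightarrow> (nat \<Rightarrow> complex) set \<Rightarrow> (nat \<Rightarrow> complex) \<Rightarrow> (nat \<Rightarrow> complex) \<Rightarrow> real"
    and n :: nat
  assumes "hol_contractible \<alpha>" and "n \<ge> 3"
  shows "\<exists>D Ds. cdomain n D \<and> (\<forall>m. cdomain n (Ds m) \<and> Ds m \<subseteq> Ds (Suc m)) \<and>
           (\<Union>m. Ds m) = D \<and>
           \<not> (\<forall>a\<in>D. \<forall>X\<in>cvec n.
                 (\<lambda>m. Wu_tilde n (\<alpha> n (Ds m)) a X) \<longlonglongrightarrow> Wu_tilde n (\<alpha> n D) a X) \<and>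
           \<not> (\<forall>a\<in>D. \<forall>X\<in>cvec n.
                 (\<lambda>m. Wu n (\<alpha> n (Ds m)) a X) \<longlonglongrightarrow> Wu n (\<alpha> n D) a X)"
proof -
  note hc = assms(1)
  have n2: "2 \<le> n" and n1: "1 \<le> n" and n0: "0 < n" using assms(2) by auto
  define D where "D = Dset n"
  define Ds where "Ds = (\<lambda>m::nat. Gset n (real (Suc m)))"
  have domD: "cdomain n D" unfolding D_def by (rule Dset_domain[OF n1])
  have domDs: "cdomain n (Ds m) \<and> Ds m \<subseteq> Ds (Suc m)" for m
    unfolding Ds_def using Gset_domain[OF n2, of "real (Suc m)"] Gset_mono[of "real (Suc m)" "real (Suc (Suc m))" n]
    by auto
  have un: "(\<Union>m. Ds m) = D"
  proof (intro set_eqI iffI)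
    fix z assume "z \<in> (\<Union>m. Ds m)"
    then show "z \<in> D" unfolding Ds_def D_def Gset_def Dset_def by auto
  next
    fix z assume z: "z \<in> D"
    obtain m :: nat where m: "2 * cmod (z 1) < real m" using reals_Archimedean2 by blast
    define r where "r = real (Suc m)"
    have r: "r > 2 * cmod (z 1)" "r \<ge> 1" using m unfolding r_def by auto
    have "cmod (z 1) / r < 1/2" using r by (simp add: divide_less_eq)
    moreover have "cmod (z 1) < r" using r by (smt (verit) norm_ge_zero)
    ultimately have "z \<in> Ds m" using z unfolding Ds_def D_def Gset_def Dset_def r_def[symmetric] by auto
    then show "z \<in> (\<Union>m. Ds m)" by blast
  qed
  have zD: "zv \<in> D" unfolding D_def by (rule zv_Dset)
  have e0: "unitvec 0 \<in> cvec n" using n0 by (rule unitvec_cvec)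
  have sG: "s_max n (\<alpha> n (Ds m)) zv = H2 (real (Suc m)) \<and> m_index n (\<alpha> n (Ds m)) zv = 2" for m
    using s_max_G[OF n2, of "real (Suc m)" "\<alpha> n (Ds m)" zv] alpha_G[OF hc n2, of "real (Suc m)"]
    unfolding Ds_def by auto
  have sD: "s_max n (\<alpha> n D) zv = H1 \<and> m_index n (\<alpha> n D) zv = 1"
    using s_max_D[OF n1, of "\<alpha> n D" zv] alpha_D[OF hc n1] unfolding D_def by auto
  have wtG: "Wu_tilde n (\<alpha> n (Ds m)) zv (unitvec 0) = sqrt (4/5)" for m
    using Wu_tilde_e0[OF n0] sG[of m] by (simp add: H2_def)
  have wtD: "Wu_tilde n (\<alpha> n D) zv (unitvec 0) = 1"
    using Wu_tilde_e0[OF n0] sD by (simp add: H1_def)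
  have wG: "Wu n (\<alpha> n (Ds m)) zv (unitvec 0) = sqrt 2 * sqrt (4/5)" for m
    unfolding Wu_def using wtG sG by simp
  have wD: "Wu n (\<alpha> n D) zv (unitvec 0) = 1"
    unfolding Wu_def using wtD sD by simp
  have ne1: "sqrt (4/5) \<noteq> (1::real)" by simp
  have ne2: "sqrt 2 * sqrt (4/5) \<noteq> (1::real)"
  proof -
    have "sqrt 2 * sqrt (4/5) = sqrt (8/5)" by (simp add: real_sqrt_mult[symmetric])
    then show ?thesis by simp
  qed
  have nc1: "\<not> (\<lambda>m. Wu_tilde n (\<alpha> n (Ds m)) zv (unitvec 0)) \<longlonglongrightarrow> Wu_tilde n (\<alpha> n D) zv (unitvec 0)"
  proof
    assume "(\<lambda>m. Wu_tilde n (\<alpha> n (Ds m)) zv (unitvec 0)) \<longlonglongrightarrow> Wu_tilde n (\<alpha> n D) zv (unitvec 0)"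
    then have "(\<lambda>m. sqrt (4/5)) \<longlonglongrightarrow> (1::real)" unfolding wtG wtD .
    then have "sqrt (4/5) = (1::real)" using LIMSEQ_unique tendsto_const by blast
    then show False using ne1 by simp
  qed
  have nc2: "\<not> (\<lambda>m. Wu n (\<alpha> n (Ds m)) zv (unitvec 0)) \<longlonglongrightarrow> Wu n (\<alpha> n D) zv (unitvec 0)"
  proof
    assume "(\<lambda>m. Wu n (\<alpha> n (Ds m)) zv (unitvec 0)) \<longlonglongrightarrow> Wu n (\<alpha> n D) zv (unitvec 0)"
    then have "(\<lambda>m. sqrt 2 * sqrt (4/5)) \<longlonglongrightarrow> (1::real)" unfolding wG wD .
    then have "sqrt 2 * sqrt (4/5) = (1::real)" using LIMSEQ_unique tendsto_const by blast
    then show False using ne2 by simp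
  qed
  show ?thesis
    apply (rule exI[of _ D], rule exI[of _ Ds])
    using domD domDs un nc1 nc2 zD e0 by blast
qed


end
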